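(* Let $\Lambda$ be a qubit channel (completely positive trace-preserving map on $2\times2$ density matrices). There exists a two-qubit state $\rho$ such that $\mathcal C\big((\mathrm{id}_A\otimes\Lambda)(\rho)\big)>\mathcal C(\rho)$ if and only if $\Lambda$ is neither unital nor semi-classical.
   Context: For a two-qubit state $\rho$ on $\mathcal H_A\otimes\mathcal H_B$ and a POVM element $M$ on $\mathcal H_A$ ($0\le M\le \mathbb 1$) with $p_M:=\mathrm{tr}(M\otimes\mathbb 1\,\rho)>0$, Bob's steered state is $\rho_B^M:=\mathrm{tr}_A(M\otimes\mathbb 1\,\rho)/p_M$. The maximal steered coherence is $$\mathcal C(\rho)=\inf_{\Xi}\ \max_{M}\ \frac{1}{p_M}\sum_{i\neq j}\big|\langle\xi_i|\mathrm{tr}_A(M\otimes \mathbb 1\,\rho)|\xi_j\rangle\big|,$$ where the infimum is over all orthonormal eigenbases $\Xi=\{|\xi_i\rangle\}$ of $\rho_B=\mathrm{tr}_A\rho$ (unique up to phases when $\rho_B$ is non-degenerate) and the maximum is over POVM elements $M$ on $\mathcal H_A$ with $p_M>0$. A channel $\Lambda$ is unital if $\Lambda(\mathbb 1)=\mathbb 1$. It is semi-classical if there is a fixed orthonormal basis $\{|k\rangle\}$ such that for every input state $\rho$, $\Lambda(\rho)=\sum_k p_k(\rho)|k\rangle\langle k|$ for some probabilities $p_k(\rho)$. *)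

theory Defs
  imports Complex_Main
begin

text \<open>A qubit has basis indexed by bool; a two-qubit system (A,B) by bool \<times> bool,
  with first component the A index and second component the B index.\<close>

type_synonym 'i cmat = "'i \<Rightarrow> 'i \<Rightarrow> complex"
type_synonym 'i cvec = "'i \<Rightarrow> complex"

definition qform_on :: "'i set \<Rightarrow> 'i cmat \<Rightarrow> 'i cvec \<Rightarrow> complex" where
  "qform_on I A v = (\<Sum>i\<in>I. \<Sum>j\<in>I. cnj (v i) * A i j * v j)"

text \<open>Positive semidefinite on the (finite) index set I: the quadratic form is real and
  nonnegative for all complex vectors (this includes hermiticity).\<close>
definition psd_on :: "'i set \<Rightarrow> 'i cmat \<Rightarrow> bool" where
  "psd_on I A \<longleftrightarrow> (\<forall>v. Im (qform_on I A v) = 0 \<and> Re (qform_on I A v) \<ge> 0)"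

abbreviation psd :: "('i::finite) cmat \<Rightarrow> bool" where
  "psd A \<equiv> psd_on UNIV A"

definition trace :: "('i::finite) cmat \<Rightarrow> complex" where
  "trace A = (\<Sum>i\<in>UNIV. A i i)"

definition idm :: "'i cmat" where
  "idm = (\<lambda>i j. if i = j then 1 else 0)"

definition density :: "('i::finite) cmat \<Rightarrow> bool" where
  "density A \<longleftrightarrow> psd A \<and> trace A = 1"

definition povm_elem :: "('i::finite) cmat \<Rightarrow> bool" where
  "povm_elem M \<longleftrightarrow> psd M \<and> psd (\<lambda>i j. idm i j - M i j)"

definition inner :: "('i::finite) cvec \<Rightarrow> 'i cvec \<Rightarrow> complex" where
  "inner u v = (\<Sum>k\<in>UNIV. cnj (u k) * v k)"

definition sandwich :: "('i::finite) cvec \<Rightarrow> 'i cmat \<Rightarrow> 'i cvec \<Rightarrow> complex" where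
  "sandwich u A v = (\<Sum>k\<in>UNIV. \<Sum>l\<in>UNIV. cnj (u k) * A k l * v l)"

definition mat_vec :: "('i::finite) cmat \<Rightarrow> 'i cvec \<Rightarrow> 'i cvec" where
  "mat_vec A v = (\<lambda>k. \<Sum>l\<in>UNIV. A k l * v l)"

definition orthonormal_basis :: "(bool \<Rightarrow> bool cvec) \<Rightarrow> bool" where
  "orthonormal_basis \<xi> \<longleftrightarrow> (\<forall>k l. inner (\<xi> k) (\<xi> l) = (if k = l then 1 else 0))"

definition eigenbasis :: "bool cmat \<Rightarrow> (bool \<Rightarrow> bool cvec) \<Rightarrow> bool" where
  "eigenbasis A \<xi> \<longleftrightarrow> orthonormal_basis \<xi> \<and>
     (\<forall>k. \<exists>c::complex. mat_vec A (\<xi> k) = (\<lambda>l. c * \<xi> k l))"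

definition ptrA :: "('a::finite \<times> 'b) cmat \<Rightarrow> 'b cmat" where
  "ptrA X = (\<lambda>i j. \<Sum>a\<in>UNIV. X (a, i) (a, j))"

definition tensor_id_mult :: "('a::finite) cmat \<Rightarrow> ('a \<times> 'b) cmat \<Rightarrow> ('a \<times> 'b) cmat" where
  "tensor_id_mult M X = (\<lambda>(a, i) (b, j). \<Sum>c\<in>UNIV. M a c * X (c, i) (b, j))"

definition id_tensor :: "('b cmat \<Rightarrow> 'c cmat) \<Rightarrow> ('a \<times> 'b) cmat \<Rightarrow> ('a \<times> 'c) cmat" where
  "id_tensor \<Lambda> X = (\<lambda>(a, i) (b, j). \<Lambda> (\<lambda>k l. X (a, k) (b, l)) i j)"

definition steered :: "bool cmat \<Rightarrow> (bool \<times> bool) cmat \<Rightarrow> bool cmat" where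
  "steered M \<rho> = ptrA (tensor_id_mult M \<rho>)"

definition prob_M :: "bool cmat \<Rightarrow> (bool \<times> bool) cmat \<Rightarrow> real" where
  "prob_M M \<rho> = Re (trace (tensor_id_mult M \<rho>))"

definition steered_coherence :: "(bool \<times> bool) cmat \<Rightarrow> real" where
  "steered_coherence \<rho> =
     (INF \<xi>\<in>{\<xi>. eigenbasis (ptrA \<rho>) \<xi>}.
        SUP M\<in>{M. povm_elem M \<and> prob_M M \<rho> > 0}.
          (1 / prob_M M \<rho>) *
            (\<Sum>(i, j)\<in>{(i, j). i \<noteq> j}. cmod (sandwich (\<xi> i) (steered M \<rho>) (\<xi> j))))"

definition linear_map :: "('b cmat \<Rightarrow> 'c cmat) \<Rightarrow> bool" where
  "linear_map \<Lambda> \<longleftrightarrow> (\<forall>a b X Y. \<Lambda> (\<lambda>i j. a * X i j + b * Y i j) =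
                                   (\<lambda>i j. a * \<Lambda> X i j + b * \<Lambda> Y i j))"

definition completely_positive :: "(('b::finite) cmat \<Rightarrow> ('c::finite) cmat) \<Rightarrow> bool" where
  "completely_positive \<Lambda> \<longleftrightarrow>
     (\<forall>(n::nat) (X :: (nat \<times> 'b) cmat). psd_on ({..<n} \<times> UNIV) X \<longrightarrow>
        psd_on ({..<n} \<times> UNIV) (id_tensor \<Lambda> X))"

definition trace_preserving :: "(('b::finite) cmat \<Rightarrow> ('c::finite) cmat) \<Rightarrow> bool" where
  "trace_preserving \<Lambda> \<longleftrightarrow> (\<forall>X. trace (\<Lambda> X) = trace X)"

definition qubit_channel :: "(bool cmat \<Rightarrow> bool cmat) \<Rightarrow> bool" where
  "qubit_channel \<Lambda> \<longleftrightarrow> linear_map \<Lambda> \<and> completely_positive \<Lambda> \<and> trace_preserving \<Lambda>"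

definition unital :: "(bool cmat \<Rightarrow> bool cmat) \<Rightarrow> bool" where
  "unital \<Lambda> \<longleftrightarrow> \<Lambda> idm = idm"

definition semi_classical :: "(bool cmat \<Rightarrow> bool cmat) \<Rightarrow> bool" where
  "semi_classical \<Lambda> \<longleftrightarrow> (\<exists>e. orthonormal_basis e \<and>
     (\<forall>\<rho>. density \<rho> \<longrightarrow> (\<exists>p :: bool \<Rightarrow> real. (\<forall>k. p k \<ge> 0) \<and> (\<Sum>k\<in>UNIV. p k) = 1 \<and>
        \<Lambda> \<rho> = (\<lambda>i j. \<Sum>k\<in>UNIV. complex_of_real (p k) * e k i * cnj (e k j)))))"

end

theory Submission
  imports Defs
begin



lemma sum_bool: "(\<Sum>x\<in>(UNIV::bool set). f x) = f False + f True"
  by (simp add: UNIV_bool)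

lemma sum_prodU: "(\<Sum>x\<in>(UNIV::('a::finite\<times>'b::finite) set). f x) = (\<Sum>a\<in>UNIV. \<Sum>b\<in>UNIV. f (a,b))"
  by (simp add: sum.cartesian_product UNIV_Times_UNIV[symmetric] del: UNIV_Times_UNIV)

lemma sum_bool2: "(\<Sum>x\<in>(UNIV::(bool\<times>bool) set). f x) = f (False,False) + f (False,True) + f (True,False) + f (True,True)"
  by (simp add: sum_prodU sum_bool add.assoc)

datatype v3 = V real real real

fun dot :: "v3 \<Rightarrow> v3 \<Rightarrow> real" where "dot (V a b c) (V d e f) = a*d + b*e + c*f"
fun vadd :: "v3 \<Rightarrow> v3 \<Rightarrow> v3" where "vadd (V a b c) (V d e f) = V (a+d) (b+e) (c+f)"
fun vsc :: "real \<Rightarrow> v3 \<Rightarrow> v3" where "vsc r (V a b c) = V (r*a) (r*b) (r*c)"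
fun cross :: "v3 \<Rightarrow> v3 \<Rightarrow> v3" where
  "cross (V a b c) (V d e f) = V (b*f - c*e) (c*d - a*f) (a*e - b*d)"
definition nsq :: "v3 \<Rightarrow> real" where "nsq x = dot x x"

definition hv :: "real \<Rightarrow> v3 \<Rightarrow> bool cmat" where
 "hv x0 x = (case x of V x1 x2 x3 \<Rightarrow> (\<lambda>i j. if i then (if j then complex_of_real (x0 - x3) else Complex x1 x2)
     else (if j then Complex x1 (-x2) else complex_of_real (x0+x3))))"

definition b0 :: "bool cmat \<Rightarrow> real" where "b0 X = Re (X False False + X True True) / 2"
definition bv :: "bool cmat \<Rightarrow> v3" where
  "bv X = V (Re (X True False)) (Im (X True False)) (Re (X False False - X True True) / 2)"
definition herm :: "bool cmat \<Rightarrow> bool" where "herm X \<longleftrightarrow> (\<forall>i j. X j i = cnj (X i j))"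

definition csq :: "complex \<Rightarrow> real" where "csq z = (Re z)\<^sup>2 + (Im z)\<^sup>2"

definition nv2 :: "bool cvec \<Rightarrow> real" where "nv2 v = csq (v False) + csq (v True)"
definition nv :: "bool cvec \<Rightarrow> v3" where
  "nv v = V (2 * Re (v True * cnj (v False))) (2 * Im (v True * cnj (v False)))
             (csq (v False) - csq (v True))"

lemma lagrange: "nsq x * nsq y = (dot x y)\<^sup>2 + nsq (cross x y)"
  by (cases x; cases y) (simp add: nsq_def power2_eq_square algebra_simps)

lemma cs: "(dot x y)\<^sup>2 \<le> nsq x * nsq y"
proof -
  have "0 \<le> nsq (cross x y)" by (cases "cross x y") (simp add: nsq_def)
  then show ?thesis using lagrange[of x y] by linarith
qed

lemma nsq_ge0: "0 \<le> nsq x" by (cases x) (simp add: nsq_def)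

lemma abs_dot: "\<bar>dot x y\<bar> \<le> sqrt (nsq x) * sqrt (nsq y)"
proof -
  have "sqrt ((dot x y)\<^sup>2) \<le> sqrt (nsq x * nsq y)" using cs real_sqrt_le_mono by blast
  then show ?thesis by (simp add: real_sqrt_mult)
qed

lemma herm_hv: "herm (hv x0 x)"
  by (cases x) (auto simp: herm_def hv_def complex_eq_iff)

lemma b0_hv[simp]: "b0 (hv x0 x) = x0" by (cases x) (simp add: b0_def hv_def)
lemma bv_hv[simp]: "bv (hv x0 x) = x" by (cases x) (simp add: bv_def hv_def)

lemma herm_eq_hv: assumes "herm X" shows "X = hv (b0 X) (bv X)"
proof -
  have d: "Im (X i i) = 0" for i
  proof -
    have e: "X i i = cnj (X i i)" using assms unfolding herm_def by blast
    have "Im (X i i) = Im (cnj (X i i))" using e by (rule arg_cong)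
    then show ?thesis by simp
  qed
  have o: "X False True = cnj (X True False)" using assms unfolding herm_def by blast
  show ?thesis
    apply (rule ext, rule ext)
    subgoal for i j using d[of False] d[of True] o
      by (cases i; cases j) (auto simp: hv_def b0_def bv_def complex_eq_iff field_simps)
    done
qed

lemma qform_bool: "qform_on UNIV X v = cnj (v False) * X False False * v False + cnj (v False) * X False True * v True
   + cnj (v True) * X True False * v False + cnj (v True) * X True True * v True"
  by (simp add: qform_on_def sum_bool)

lemma hv_ent: "hv x0 (V x1 x2 x3) False False = complex_of_real (x0+x3)"
  "hv x0 (V x1 x2 x3) False True = Complex x1 (-x2)"
  "hv x0 (V x1 x2 x3) True False = Complex x1 x2"
  "hv x0 (V x1 x2 x3) True True = complex_of_real (x0-x3)"
  by (simp_all add: hv_def)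

lemma qform_hv: "qform_on UNIV (hv x0 x) v = complex_of_real (x0 * nv2 v + dot x (nv v))"
proof -
  obtain a1 a2 where a: "v False = Complex a1 a2" by (metis complex.exhaust)
  obtain c1 c2 where c: "v True = Complex c1 c2" by (metis complex.exhaust)
  obtain x1 x2 x3 where x: "x = V x1 x2 x3" by (cases x)
  have 1: "nv2 v = a1*a1 + a2*a2 + c1*c1+c2*c2" by (simp add: nv2_def csq_def a c power2_eq_square)
  have 2: "nv v = V (2*(c1*a1 + c2*a2)) (2*(c2*a1 - c1*a2)) (a1*a1+a2*a2 - c1*c1-c2*c2)"
    by (simp add: nv_def csq_def a c power2_eq_square)
  show ?thesis
    unfolding qform_bool a c x hv_ent 1 2
    apply (simp add: complex_eq_iff)
    apply (simp add: algebra_simps)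
    done
qed

lemma nsq_nv: "nsq (nv v) = (nv2 v)\<^sup>2"
proof -
  obtain a1 a2 where a: "v False = Complex a1 a2" by (metis complex.exhaust)
  obtain c1 c2 where c: "v True = Complex c1 c2" by (metis complex.exhaust)
  show ?thesis
    by (simp add: nsq_def nv2_def nv_def a c csq_def algebra_simps power2_eq_square)
qed

lemma csq_cmod: "csq z = (cmod z)\<^sup>2" by (simp add: csq_def cmod_power2)
lemma csq_ge0: "0 \<le> csq z" by (simp add: csq_def)
lemma nv2_ge0: "0 \<le> nv2 v" by (simp add: nv2_def csq_ge0)

lemma dot_vsc2[simp]: "dot x (vsc r y) = r * dot x y" by (cases x; cases y) (simp add: algebra_simps)
lemma dot_vsc1[simp]: "dot (vsc r x) y = r * dot x y" by (cases x; cases y) (simp add: algebra_simps)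
lemma nsq_vsc[simp]: "nsq (vsc r x) = r\<^sup>2 * nsq x" by (simp add: nsq_def power2_eq_square)
lemma dot_comm: "dot x y = dot y x" by (cases x; cases y) (simp add: algebra_simps)
lemma dot_vadd1[simp]: "dot (vadd x y) z = dot x z + dot y z" by (cases x; cases y; cases z) (simp add: algebra_simps)
lemma dot_vadd2[simp]: "dot z (vadd x y) = dot z x + dot z y" by (cases x; cases y; cases z) (simp add: algebra_simps)
lemma nsq_zero_iff: "nsq x = 0 \<longleftrightarrow> x = V 0 0 0"
  by (cases x) (auto simp: nsq_def add_nonneg_eq_0_iff)

definition vec :: "complex \<Rightarrow> complex \<Rightarrow> bool cvec" where "vec a b = (\<lambda>k. if k then b else a)"

lemma axis_exists:
  assumes "nsq m = 1" shows "\<exists>v. nv2 v = 1 \<and> nv v = m"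
proof -
  obtain m1 m2 m3 where m: "m = V m1 m2 m3" by (cases m)
  have h: "m1\<^sup>2 + m2\<^sup>2 + m3\<^sup>2 = 1" using assms by (simp add: m nsq_def power2_eq_square)
  show ?thesis
  proof (cases "m3 = -1")
    case True
    then have "m1 = 0" "m2 = 0" using h by (auto simp: power2_eq_square add_nonneg_eq_0_iff)
    then show ?thesis using True
      by (intro exI[of _ "vec 0 1"]) (simp add: vec_def nv2_def nv_def csq_def m)
  next
    case False
    have "m3\<^sup>2 \<le> 1" using h zero_le_power2[of m1] zero_le_power2[of m2] by linarith
    then have "\<bar>m3\<bar> \<le> 1" by (simp add: abs_square_le_1)
    then have m3: "m3 > -1" using False by linarith
    define a where "a = sqrt ((1 + m3) / 2)"
    have a0: "a > 0" using m3 by (simp add: a_def)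
    have a2: "a * a = (1 + m3) / 2" using m3 by (simp add: a_def)
    define v where "v = vec (complex_of_real a) (Complex (m1 / (2*a)) (m2 / (2*a)))"
    have q: "m1*m1 + m2*m2 = (1 - m3) * (a*a*2)" using h a2 by (simp add: power2_eq_square algebra_simps)
    have r: "(m1*m1 + m2*m2) / (4*(a*a)) = (1 - m3)/2" using q a0 by (simp add: field_simps)
    have "nv2 v = a*a + (m1*m1 + m2*m2) / (4 * (a*a))"
      using a0 by (simp add: v_def vec_def nv2_def csq_def power2_eq_square field_simps)
    also have "\<dots> = 1" by (subst r) (simp add: a2 field_simps)
    finally have 1: "nv2 v = 1" .
    have "nv v = V m1 m2 (a*a - (m1*m1 + m2*m2) / (4 * (a*a)))"
      using a0 by (simp add: v_def vec_def nv_def csq_def power2_eq_square field_simps)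
    also have "\<dots> = m"
    proof -
      have "a*a - (m1*m1 + m2*m2) / (4 * (a*a)) = m3" by (subst r) (simp add: a2 field_simps)
      then show ?thesis by (simp add: m)
    qed
    finally show ?thesis using 1 by blast
  qed
qed

lemma qform_vec: "qform_on UNIV X (vec a b) = cnj a * X False False * a + cnj a * X False True * b
    + cnj b * X True False * a + cnj b * X True True * b"
  by (simp add: qform_on_def sum_bool vec_def)




lemma psd_herm: assumes "psd X" shows "herm X"
proof -
  have im: "Im (qform_on UNIV X v) = 0" for v using assms by (simp add: psd_on_def)
  have 1: "Im (X False False) = 0" using im[of "vec 1 0"] by (simp add: qform_vec)
  have 2: "Im (X True True) = 0" using im[of "vec 0 1"] by (simp add: qform_vec)
  have 3: "Im (X False True) + Im (X True False) = 0" using im[of "vec 1 1"] 1 2 by (simp add: qform_vec)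
  have 4: "Re (X False True) - Re (X True False) = 0" using im[of "vec 1 \<i>"] 1 2 by (simp add: qform_vec)
  show ?thesis unfolding herm_def
  proof (intro allI)
    fix i j show "X j i = cnj (X i j)"
      using 1 2 3 4 by (cases i; cases j) (auto simp: complex_eq_iff)
  qed
qed

lemma psd_hv_iff: "psd (hv x0 x) \<longleftrightarrow> 0 \<le> x0 \<and> nsq x \<le> x0\<^sup>2"
proof
  assume p: "psd (hv x0 x)"
  have re: "0 \<le> x0 * nv2 v + dot x (nv v)" for v
    using p[unfolded psd_on_def, rule_format, of v] by (simp add: qform_hv)
  show "0 \<le> x0 \<and> nsq x \<le> x0\<^sup>2"
  proof (cases "nsq x = 0")
    case True
    have "nv2 (vec 1 0) = 1" by (simp add: nv2_def vec_def csq_def)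
    then have "0 \<le> x0 + dot x (nv (vec 1 0))" using re[of "vec 1 0"] by simp
    moreover have "x = V 0 0 0" using True nsq_zero_iff by blast
    ultimately show ?thesis using True by (simp add: nv_def)
  next
    case False
    define s where "s = sqrt (nsq x)"
    have s0: "s > 0" using False nsq_ge0[of x] by (simp add: s_def)
    have ss: "s\<^sup>2 = nsq x" using nsq_ge0[of x] by (simp add: s_def)
    have "nsq (vsc (-1/s) x) = 1" using s0 ss False by (simp add: power_divide)
    then obtain v where v: "nv2 v = 1" "nv v = vsc (-1/s) x" using axis_exists by blast
    have "0 \<le> x0 - nsq x / s" using re[of v] v by (simp add: nsq_def)
    moreover have "nsq x / s = s" using s0 ss by (simp add: power2_eq_square field_simps)
    ultimately have "s \<le> x0" by linarith
    then show ?thesis using s0 ss power_mono[of s x0 2] by simp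
  qed
next
  assume a: "0 \<le> x0 \<and> nsq x \<le> x0\<^sup>2"
  have "sqrt (nsq x) \<le> x0" using a real_le_lsqrt nsq_ge0 by (metis real_sqrt_le_iff real_sqrt_unique)
  show "psd (hv x0 x)" unfolding psd_on_def
  proof (intro allI conjI)
    fix v
    show "Im (qform_on UNIV (hv x0 x) v) = 0" by (simp add: qform_hv)
    have n: "sqrt (nsq (nv v)) = nv2 v" using nv2_ge0[of v] by (simp add: nsq_nv)
    have "\<bar>dot x (nv v)\<bar> \<le> sqrt (nsq x) * nv2 v" using abs_dot[of x "nv v"] n by simp
    also have "\<dots> \<le> x0 * nv2 v" using \<open>sqrt (nsq x) \<le> x0\<close> nv2_ge0[of v] by (simp add: mult_right_mono)
    finally show "0 \<le> Re (qform_on UNIV (hv x0 x) v)" by (simp add: qform_hv)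
  qed
qed

definition perp :: "bool cvec \<Rightarrow> bool cvec" where
  "perp v = (\<lambda>k. if k then cnj (v False) else - cnj (v True))"
definition obas :: "bool cvec \<Rightarrow> bool \<Rightarrow> bool cvec" where
  "obas v = (\<lambda>b. if b then perp v else v)"

lemma inner_self: "inner v v = complex_of_real (nv2 v)"
  by (simp add: inner_def sum_bool nv2_def csq_def complex_eq_iff power2_eq_square)

lemma inner_perp: "inner v (perp v) = 0" "inner (perp v) v = 0"
  by (simp_all add: inner_def sum_bool perp_def algebra_simps)

lemma nv2_perp[simp]: "nv2 (perp v) = nv2 v" by (simp add: nv2_def perp_def csq_def)
lemma nv_perp[simp]: "nv (perp v) = vsc (-1) (nv v)"
  by (simp add: nv_def perp_def csq_def algebra_simps)

lemma inner_conj: "inner u v = cnj (inner v u)"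
  by (simp add: inner_def sum_bool mult.commute)

lemma obas_on: assumes "nv2 v = 1" shows "orthonormal_basis (obas v)"
  unfolding orthonormal_basis_def obas_def
  using assms inner_self[of v] inner_self[of "perp v"] inner_perp by auto

lemma inner_ab: "inner u v = cnj (u False) * v False + cnj (u True) * v True"
  by (simp add: inner_def sum_bool)

lemma onb_char:
  assumes "orthonormal_basis \<xi>"
  shows "nv2 (\<xi> False) = 1" "\<exists>c. cmod c = 1 \<and> \<xi> True = (\<lambda>k. c * perp (\<xi> False) k)"
proof -
  have i: "inner (\<xi> k) (\<xi> l) = (if k = l then 1 else 0)" for k l
    using assms by (simp add: orthonormal_basis_def)
  show "nv2 (\<xi> False) = 1" using i[of False False] inner_self[of "\<xi> False"] by simp
  define \<alpha> where "\<alpha> = \<xi> False False"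
  define \<beta> where "\<beta> = \<xi> False True"
  define \<gamma> where "\<gamma> = \<xi> True False"
  define \<delta> where "\<delta> = \<xi> True True"
  have h1: "cnj \<alpha> * \<alpha> + cnj \<beta> * \<beta> = 1" using i[of False False] by (simp add: inner_ab \<alpha>_def \<beta>_def)
  have h2: "cnj \<gamma> * \<gamma> + cnj \<delta> * \<delta> = 1" using i[of True True] by (simp add: inner_ab \<gamma>_def \<delta>_def)
  have h3: "cnj \<alpha> * \<gamma> + cnj \<beta> * \<delta> = 0" using i[of False True]
    by (simp add: inner_ab \<alpha>_def \<beta>_def \<gamma>_def \<delta>_def)
  define c where "c = \<delta> * \<alpha> - \<gamma> * \<beta>"
  have g: "\<gamma> = c * (- cnj \<beta>)" unfolding c_def using h1 h3 by algebra
  have d: "\<delta> = c * cnj \<alpha>" unfolding c_def using h1 h3 by algebra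
  have "cnj c * c * (cnj \<alpha> * \<alpha> + cnj \<beta> * \<beta>) = cnj \<gamma> * \<gamma> + cnj \<delta> * \<delta>"
    by (subst g, subst g, subst d, subst d) (simp add: algebra_simps)
  then have cc: "c * cnj c = 1" using h1 h2 by (simp add: mult.commute)
  have "complex_of_real ((cmod c)\<^sup>2) = 1" using cc complex_norm_square[of c] by simp
  then have "(cmod c)\<^sup>2 = 1" by (metis of_real_eq_1_iff)
  then have c1: "cmod c = 1" using norm_ge_zero[of c] by (auto simp: power2_eq_1_iff)
  have "\<xi> True = (\<lambda>k. c * perp (\<xi> False) k)"
  proof
    fix k show "\<xi> True k = c * perp (\<xi> False) k"
      using g d by (cases k) (simp_all add: perp_def \<alpha>_def \<beta>_def \<gamma>_def \<delta>_def)
  qed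
  then show "\<exists>c. cmod c = 1 \<and> \<xi> True = (\<lambda>k. c * perp (\<xi> False) k)" using c1 by blast
qed

lemma sandwich_scale: "sandwich u (X::bool cmat) (\<lambda>k. c * w k) = c * sandwich u X w"
  by (simp add: sandwich_def sum_bool algebra_simps)

lemma sandwich_hv_conj: "sandwich w (hv x0 x) u = cnj (sandwich u (hv x0 x) w)"
  by (cases x) (simp add: sandwich_def sum_bool hv_ent algebra_simps complex_cnj)

lemma sandwich_herm: "herm X \<Longrightarrow> sandwich w X u = cnj (sandwich u X w)"
  by (metis herm_eq_hv sandwich_hv_conj)

lemma sw_perp: "(cmod (sandwich v (hv x0 x) (perp v)))\<^sup>2 = nsq x * (nv2 v)\<^sup>2 - (dot x (nv v))\<^sup>2"
proof -
  obtain a1 a2 where a: "v False = Complex a1 a2" by (metis complex.exhaust)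
  obtain c1 c2 where c: "v True = Complex c1 c2" by (metis complex.exhaust)
  obtain x1 x2 x3 where x: "x = V x1 x2 x3" by (cases x)
  have 1: "nv2 v = a1*a1 + a2*a2 + c1*c1+c2*c2" by (simp add: nv2_def csq_def a c power2_eq_square)
  have 2: "nv v = V (2*(c1*a1 + c2*a2)) (2*(c2*a1 - c1*a2)) (a1*a1+a2*a2 - c1*c1-c2*c2)"
    by (simp add: nv_def csq_def a c power2_eq_square)
  have re: "Re (sandwich v (hv x0 x) (perp v)) =
     x1*(a1*a1 + c2*c2 - a2*a2 - c1*c1) + 2*x3*(a2*c2 - a1*c1) - 2*x2*(a1*a2 + c1*c2)"
    by (simp add: sandwich_def sum_bool hv_ent perp_def a c x) (simp add: algebra_simps)
  have im: "Im (sandwich v (hv x0 x) (perp v)) =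
     x2*(a2*a2 + c2*c2 - a1*a1 - c1*c1) + 2*x3*(a1*c2 + a2*c1) + 2*x1*(c1*c2 - a1*a2)"
    by (simp add: sandwich_def sum_bool hv_ent perp_def a c x) (simp add: algebra_simps)
  show ?thesis
    unfolding cmod_power2 re im unfolding 1 2 x nsq_def by (simp only: dot.simps) algebra
qed

lemma pairs_neq: "{(i,j). (i::bool) \<noteq> j} = {(False,True),(True,False)}" by auto

lemma coh_formula:
  assumes "orthonormal_basis \<xi>" "herm X"
  shows "(\<Sum>(i, j)\<in>{(i, j). i \<noteq> j}. cmod (sandwich (\<xi> i) X (\<xi> j)))
       = 2 * sqrt (nsq (bv X) - (dot (bv X) (nv (\<xi> False)))\<^sup>2)"
proof -
  obtain c where c: "cmod c = 1" "\<xi> True = (\<lambda>k. c * perp (\<xi> False) k)" using onb_char[OF assms(1)] by blast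
  have n: "nv2 (\<xi> False) = 1" using onb_char[OF assms(1)] by blast
  have X: "X = hv (b0 X) (bv X)" using herm_eq_hv[OF assms(2)] .
  have "cmod (sandwich (\<xi> False) X (\<xi> True)) = cmod (sandwich (\<xi> False) X (perp (\<xi> False)))"
    by (simp add: c sandwich_scale norm_mult)
  also have "\<dots> = sqrt ((cmod (sandwich (\<xi> False) X (perp (\<xi> False))))\<^sup>2)" by simp
  also have "\<dots> = sqrt (nsq (bv X) - (dot (bv X) (nv (\<xi> False)))\<^sup>2)"
    by (subst X, subst sw_perp) (simp add: n)
  finally have s1: "cmod (sandwich (\<xi> False) X (\<xi> True)) = sqrt (nsq (bv X) - (dot (bv X) (nv (\<xi> False)))\<^sup>2)" .
  have s2: "cmod (sandwich (\<xi> True) X (\<xi> False)) = cmod (sandwich (\<xi> False) X (\<xi> True))"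
    using sandwich_herm[OF assms(2)] by (metis complex_mod_cnj)
  show ?thesis unfolding pairs_neq using s1 s2 by simp
qed




lemma trace_bool: "trace (X::bool cmat) = X False False + X True True"
  by (simp add: trace_def sum_bool)

lemma mat_vec_bool: "mat_vec A v k = A k False * v False + A k True * v True"
  by (simp add: mat_vec_def sum_bool)

lemma mat_vec_scale: "mat_vec (A::bool cmat) (\<lambda>l. c * w l) = (\<lambda>k. c * mat_vec A w k)"
  by (rule ext) (simp add: mat_vec_bool algebra_simps)

lemma inner_one: "nv2 v = 1 \<Longrightarrow> cnj (v False) * v False + cnj (v True) * v True = 1"
  using inner_self[of v] by (simp add: inner_ab)

lemma eig_a:
  assumes "herm N" "eigenbasis N \<xi>"
  shows "cross (bv N) (nv (\<xi> False)) = V 0 0 0"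
proof -
  have on: "orthonormal_basis \<xi>" using assms(2) by (simp add: eigenbasis_def)
  have n1: "nv2 (\<xi> False) = 1" using onb_char[OF on] by blast
  obtain c where c: "mat_vec N (\<xi> False) = (\<lambda>l. c * \<xi> False l)" using assms(2) by (auto simp: eigenbasis_def)
  define v where "v = \<xi> False"
  obtain x1 x2 x3 where x: "bv N = V x1 x2 x3" by (cases "bv N")
  define x0 where "x0 = b0 N"
  have N: "N = hv x0 (V x1 x2 x3)" using herm_eq_hv[OF assms(1)] x x0_def by simp
  have e1: "N False False * v False + N False True * v True = c * v False"
    using fun_cong[OF c, of False] by (simp add: mat_vec_bool v_def)
  have e2: "N True False * v False + N True True * v True = c * v True"
    using fun_cong[OF c, of True] by (simp add: mat_vec_bool v_def)
  have "c = c * (cnj (v False) * v False + cnj (v True) * v True)" using inner_one[OF n1] by (simp add: v_def)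
  also have "\<dots> = cnj (v False) * (c * v False) + cnj (v True) * (c * v True)" by (simp add: algebra_simps)
  also have "\<dots> = qform_on UNIV N v" unfolding e1[symmetric] e2[symmetric] qform_bool by (simp add: algebra_simps)
  finally have "c = complex_of_real (x0 * nv2 v + dot (V x1 x2 x3) (nv v))" by (simp add: N qform_hv)
  then obtain r where r: "c = complex_of_real r" by blast
  obtain a1 a2 where a: "v False = Complex a1 a2" by (metis complex.exhaust)
  obtain c1 c2 where cc: "v True = Complex c1 c2" by (metis complex.exhaust)
  have 2: "nv v = V (2*(c1*a1 + c2*a2)) (2*(c2*a1 - c1*a2)) (a1*a1+a2*a2 - c1*c1-c2*c2)"
    by (simp add: nv_def csq_def a cc power2_eq_square)
  have E1: "(x0 + x3) * a1 + x1 * c1 + x2 * c2 = r * a1" "(x0 + x3) * a2 + x1 * c2 - x2 * c1 = r * a2"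
    using e1 unfolding N hv_ent a cc r by (simp_all add: complex_eq_iff algebra_simps)
  have E2: "x1 * a1 - x2 * a2 + (x0 - x3) * c1 = r * c1" "x1 * a2 + x2 * a1 + (x0 - x3) * c2 = r * c2"
    using e2 unfolding N hv_ent a cc r by (simp_all add: complex_eq_iff algebra_simps)
  have g1: "x2 * (a1*a1+a2*a2 - c1*c1-c2*c2) - x3 * (2*(c2*a1 - c1*a2)) = 0"
    using E1 E2 by algebra
  have g2: "x3 * (2*(c1*a1 + c2*a2)) - x1 * (a1*a1+a2*a2 - c1*c1-c2*c2) = 0"
    using E1 E2 by algebra
  have g3: "x1 * (2*(c2*a1 - c1*a2)) - x2 * (2*(c1*a1 + c2*a2)) = 0"
    using E1 E2 by algebra
  show ?thesis unfolding x v_def[symmetric] 2 using g1 g2 g3 by simp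
qed

lemma vec_par:
  assumes "nsq n = 1" "cross x n = V 0 0 0"
  shows "x = vsc (dot x n) n"
proof -
  obtain x1 x2 x3 where x: "x = V x1 x2 x3" by (cases x)
  obtain n1 n2 n3 where n: "n = V n1 n2 n3" by (cases n)
  have "nsq x * nsq n = (dot x n)\<^sup>2 + nsq (cross x n)" by (rule lagrange)
  then have l: "nsq x = (dot x n)\<^sup>2" using assms by (simp add: nsq_def)
  define d where "d = dot x n"
  have "nsq (vadd x (vsc (- d) n)) = nsq x - 2 * d * dot x n + d\<^sup>2 * nsq n"
    unfolding x n nsq_def by (simp add: algebra_simps power2_eq_square)
  also have "\<dots> = 0" using l assms(1) by (simp add: d_def power2_eq_square)
  finally have "vadd x (vsc (- d) n) = V 0 0 0" using nsq_zero_iff by blast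
  then show ?thesis unfolding d_def[symmetric] using x n by simp
qed

lemma mv_hv_nv: "mat_vec (hv x0 (vsc s (nv v))) v = (\<lambda>l. complex_of_real (x0 + s * nv2 v) * v l)"
proof (rule ext)
  fix l
  obtain a1 a2 where a: "v False = Complex a1 a2" by (metis complex.exhaust)
  obtain c1 c2 where cc: "v True = Complex c1 c2" by (metis complex.exhaust)
  have 1: "nv2 v = a1*a1 + a2*a2 + c1*c1+c2*c2" by (simp add: nv2_def csq_def a cc power2_eq_square)
  have 2: "nv v = V (2*(c1*a1 + c2*a2)) (2*(c2*a1 - c1*a2)) (a1*a1+a2*a2 - c1*c1-c2*c2)"
    by (simp add: nv_def csq_def a cc power2_eq_square)
  show "mat_vec (hv x0 (vsc s (nv v))) v l = complex_of_real (x0 + s * nv2 v) * v l"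
    unfolding mat_vec_bool 1 2 by (cases l) (simp_all add: hv_ent a cc complex_eq_iff algebra_simps)
qed

lemma mv_hv_nv_perp: "mat_vec (hv x0 (vsc s (nv v))) (perp v) = (\<lambda>l. complex_of_real (x0 - s * nv2 v) * perp v l)"
proof (rule ext)
  fix l
  obtain a1 a2 where a: "v False = Complex a1 a2" by (metis complex.exhaust)
  obtain c1 c2 where cc: "v True = Complex c1 c2" by (metis complex.exhaust)
  have 1: "nv2 v = a1*a1 + a2*a2 + c1*c1+c2*c2" by (simp add: nv2_def csq_def a cc power2_eq_square)
  have 2: "nv v = V (2*(c1*a1 + c2*a2)) (2*(c2*a1 - c1*a2)) (a1*a1+a2*a2 - c1*c1-c2*c2)"
    by (simp add: nv_def csq_def a cc power2_eq_square)
  show "mat_vec (hv x0 (vsc s (nv v))) (perp v) l = complex_of_real (x0 - s * nv2 v) * perp v l"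
    unfolding mat_vec_bool 1 2 by (cases l) (simp_all add: hv_ent a cc perp_def complex_eq_iff algebra_simps)
qed

lemma nsq_nv1: "nv2 v = 1 \<Longrightarrow> nsq (nv v) = 1" by (simp add: nsq_nv)

lemma eig_b:
  assumes "orthonormal_basis \<xi>" "cross x (nv (\<xi> False)) = V 0 0 0"
  shows "eigenbasis (hv x0 x) \<xi>"
proof -
  have n1: "nv2 (\<xi> False) = 1" using onb_char[OF assms(1)] by blast
  obtain c where c: "\<xi> True = (\<lambda>k. c * perp (\<xi> False) k)" using onb_char[OF assms(1)] by blast
  define s where "s = dot x (nv (\<xi> False))"
  have xe: "x = vsc s (nv (\<xi> False))" unfolding s_def by (rule vec_par[OF nsq_nv1[OF n1] assms(2)])
  show ?thesis unfolding eigenbasis_def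
  proof (intro conjI allI assms(1))
    fix k show "\<exists>c. mat_vec (hv x0 x) (\<xi> k) = (\<lambda>l. c * \<xi> k l)"
    proof (cases k)
      case True
      have "mat_vec (hv x0 x) (\<xi> True) = (\<lambda>l. complex_of_real (x0 - s * nv2 (\<xi> False)) * \<xi> True l)"
        unfolding xe c mat_vec_scale mv_hv_nv_perp by (simp add: algebra_simps)
      then show ?thesis using True by auto
    next
      case False
      have "mat_vec (hv x0 x) (\<xi> False) = (\<lambda>l. complex_of_real (x0 + s * nv2 (\<xi> False)) * \<xi> False l)"
        unfolding xe mv_hv_nv by simp
      then show ?thesis using False by auto
    qed
  qed
qed

lemma cross_self: "cross x (vsc r x) = V 0 0 0" by (cases x) (simp add: algebra_simps)
lemma cross_zero: "cross (V 0 0 0) y = V 0 0 0" by (cases y) simp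

lemma axis_basis: "nsq m = 1 \<Longrightarrow> \<exists>\<xi>. orthonormal_basis \<xi> \<and> nv (\<xi> False) = m"
  using axis_exists obas_on by (metis obas_def)

lemma eig_exists: assumes "herm N" shows "\<exists>\<xi>. eigenbasis N \<xi>"
proof -
  define x where "x = bv N"
  define m where "m = (if nsq x = 0 then V 0 0 1 else vsc (1 / sqrt (nsq x)) x)"
  have "nsq m = 1" using nsq_ge0[of x] by (simp add: m_def nsq_def power_divide)
  then obtain \<xi> where \<xi>: "orthonormal_basis \<xi>" "nv (\<xi> False) = m" using axis_basis by blast
  have "cross x m = V 0 0 0"
  proof (cases "nsq x = 0")
    case True then show ?thesis using nsq_zero_iff cross_zero m_def by simp
  next
    case False then show ?thesis by (simp add: m_def cross_self)
  qed
  then have "eigenbasis (hv (b0 N) x) \<xi>" using eig_b \<xi> by simp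
  then show ?thesis using herm_eq_hv[OF assms] x_def by metis
qed




lemma idm_hv: "idm = hv 1 (V 0 0 0)"
  by (intro ext) (auto simp: idm_def hv_def complex_eq_iff)

lemma hv_lin: "(\<lambda>i j. complex_of_real a * hv p x i j + complex_of_real b * hv q y i j)
   = hv (a*p + b*q) (vadd (vsc a x) (vsc b y))"
  by (cases x; cases y) (intro ext, auto simp: hv_def complex_eq_iff algebra_simps)

lemma bv_lin: "bv (\<lambda>i j. complex_of_real a * X i j + complex_of_real b * Y i j) = vadd (vsc a (bv X)) (vsc b (bv Y))"
  by (simp add: bv_def algebra_simps add_divide_distrib diff_divide_distrib)

lemma hermD: "herm A \<Longrightarrow> A j i = cnj (A i j)" unfolding herm_def by blast

lemma herm_comb: assumes "herm A" "herm B" shows "herm (\<lambda>i j. complex_of_real a * A i j + complex_of_real b * B i j)"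
  unfolding herm_def
proof (intro allI)
  fix i j
  have "A j i = cnj (A i j)" "B j i = cnj (B i j)" using hermD assms by auto
  then show "complex_of_real a * A j i + complex_of_real b * B j i = cnj (complex_of_real a * A i j + complex_of_real b * B i j)"
    by simp
qed

lemma b0_trace: "b0 X = Re (trace X) / 2" by (simp add: b0_def trace_bool)

lemma steered_expl: "steered M \<rho> = (\<lambda>i j. \<Sum>a\<in>UNIV. \<Sum>c\<in>UNIV. M a c * \<rho> (c,i) (a,j))"
  by (simp add: steered_def ptrA_def tensor_id_mult_def)

lemma ptrA_expl: "ptrA \<rho> = (\<lambda>i j. \<Sum>a\<in>UNIV. \<rho> (a,i) (a,j))"
  by (simp add: ptrA_def)

lemma trace_steered: "trace (tensor_id_mult M \<rho>) = trace (steered M \<rho>)"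
  unfolding trace_def steered_expl tensor_id_mult_def
  by (simp add: sum_prodU) (rule sum.swap)

lemma trace_ptrA: "trace (ptrA (\<rho>::('a::finite\<times>'b::finite) cmat)) = trace \<rho>"
  unfolding trace_def ptrA_expl by (simp add: sum_prodU) (rule sum.swap)

lemma steered_idm: "steered idm \<rho> = ptrA \<rho>"
  unfolding steered_expl ptrA_expl by (simp add: idm_def sum_bool)

lemma prob_steered: "prob_M M \<rho> = Re (trace (steered M \<rho>))"
  by (simp add: prob_M_def trace_steered)

lemma qform1: "qform_on ({..<1::nat} \<times> (UNIV::bool set)) A u = qform_on UNIV (\<lambda>i j. A (0,i) (0,j)) (\<lambda>k. u (0,k))"
proof -
  have e: "{..<1::nat} \<times> (UNIV::bool set) = {(0,False),(0,True)}" by auto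
  show ?thesis unfolding e by (simp add: qform_on_def sum_bool)
qed

lemma psd1: "psd_on ({..<1::nat} \<times> (UNIV::bool set)) A \<longleftrightarrow> psd (\<lambda>i j. A (0,i) (0,j))"
  unfolding psd_on_def qform1
proof
  assume h: "\<forall>u. Im (qform_on UNIV (\<lambda>i j. A (0, i) (0, j)) (\<lambda>k. u (0, k))) = 0 \<and> 0 \<le> Re (qform_on UNIV (\<lambda>i j. A (0, i) (0, j)) (\<lambda>k. u (0, k)))"
  show "\<forall>v. Im (qform_on UNIV (\<lambda>i j. A (0, i) (0, j)) v) = 0 \<and> 0 \<le> Re (qform_on UNIV (\<lambda>i j. A (0, i) (0, j)) v)"
  proof
    fix v :: "bool cvec"
    show "Im (qform_on UNIV (\<lambda>i j. A (0, i) (0, j)) v) = 0 \<and> 0 \<le> Re (qform_on UNIV (\<lambda>i j. A (0, i) (0, j)) v)"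
      using h[rule_format, of "\<lambda>p. v (snd p)"] by simp
  qed
qed blast

context
  fixes \<Lambda> :: "bool cmat \<Rightarrow> bool cmat"
  assumes ch: "qubit_channel \<Lambda>"
begin

lemma lin: "\<Lambda> (\<lambda>i j. a * X i j + b * Y i j) = (\<lambda>i j. a * \<Lambda> X i j + b * \<Lambda> Y i j)"
  using ch by (simp add: qubit_channel_def linear_map_def)

lemma lin_scale: "\<Lambda> (\<lambda>i j. a * X i j) = (\<lambda>i j. a * \<Lambda> X i j)"
  using lin[of a X 0 X] by simp

lemma lin_add: "\<Lambda> (\<lambda>i j. X i j + Y i j) = (\<lambda>i j. \<Lambda> X i j + \<Lambda> Y i j)"
  using lin[of 1 X 1 Y] by simp

lemma lin_zero: "\<Lambda> (\<lambda>i j. 0) = (\<lambda>i j. 0)"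
  using lin_scale[of 0 "\<lambda>i j. 0"] by simp

lemma lin_sum: "finite S \<Longrightarrow> \<Lambda> (\<lambda>i j. \<Sum>k\<in>S. f k i j) = (\<lambda>i j. \<Sum>k\<in>S. \<Lambda> (f k) i j)"
proof (induction S rule: finite_induct)
  case empty then show ?case using lin_zero by simp
next
  case (insert k S)
  have "\<Lambda> (\<lambda>i j. \<Sum>k\<in>insert k S. f k i j) = \<Lambda> (\<lambda>i j. f k i j + (\<Sum>k\<in>S. f k i j))"
    using insert by simp
  also have "\<dots> = (\<lambda>i j. \<Lambda> (f k) i j + \<Lambda> (\<lambda>i j. \<Sum>k\<in>S. f k i j) i j)"
    by (subst lin_add) simp
  finally show ?case using insert by simp
qed

lemma tp: "trace (\<Lambda> X) = trace X"
  using ch by (simp add: qubit_channel_def trace_preserving_def)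

lemma pos: assumes "psd X" shows "psd (\<Lambda> X)"
proof -
  define Y :: "(nat \<times> bool) cmat" where "Y = (\<lambda>p q. X (snd p) (snd q))"
  have "psd_on ({..<1} \<times> UNIV) Y" unfolding psd1 using assms by (simp add: Y_def)
  then have "psd_on ({..<1} \<times> UNIV) (id_tensor \<Lambda> Y)"
    using ch by (simp add: qubit_channel_def completely_positive_def)
  then have "psd (\<lambda>i j. id_tensor \<Lambda> Y (0,i) (0,j))" unfolding psd1 .
  moreover have "(\<lambda>i j. id_tensor \<Lambda> Y (0,i) (0,j)) = \<Lambda> X"
    by (simp add: id_tensor_def Y_def)
  ultimately show ?thesis by simp
qed

lemma herm_pres: assumes "herm X" shows "herm (\<Lambda> X)"
proof -
  define x0 where "x0 = b0 X"
  define x where "x = bv X"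
  define r where "r = sqrt (nsq x)"
  have r0: "0 \<le> r" using nsq_ge0[of x] by (simp add: r_def)
  have rr: "nsq x = r\<^sup>2" using nsq_ge0[of x] by (simp add: r_def)
  define P where "P = hv (\<bar>x0\<bar> + r) x"
  define Q where "Q = hv (\<bar>x0\<bar> + r - x0) (V 0 0 0)"
  have pP: "psd P" unfolding P_def psd_hv_iff rr using r0 by (simp add: power_mono)
  have ax: "x0 \<le> \<bar>x0\<bar>" by simp
  have pQ: "psd Q" unfolding Q_def psd_hv_iff using r0 ax by (simp add: nsq_def)
  have "X = hv x0 x" using herm_eq_hv[OF assms] x0_def x_def by simp
  also have "\<dots> = (\<lambda>i j. complex_of_real 1 * P i j + complex_of_real (-1) * Q i j)"
    unfolding P_def Q_def hv_lin by (cases x) simp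
  finally have e: "X = (\<lambda>i j. complex_of_real 1 * P i j + complex_of_real (-1) * Q i j)" .
  have "\<Lambda> X = (\<lambda>i j. complex_of_real 1 * \<Lambda> P i j + complex_of_real (-1) * \<Lambda> Q i j)"
    by (subst e) (rule lin)
  then show ?thesis using herm_comb psd_herm pos pP pQ by metis
qed

definition Tm :: "v3 \<Rightarrow> v3" where "Tm x = bv (\<Lambda> (hv 0 x))"
definition tv :: v3 where "tv = bv (\<Lambda> idm)"

lemma L_hv0: "\<Lambda> (hv 0 x) = hv 0 (Tm x)"
proof -
  have h: "herm (\<Lambda> (hv 0 x))" using herm_pres herm_hv by blast
  have "b0 (\<Lambda> (hv 0 x)) = 0" unfolding b0_trace tp by (simp add: b0_trace[symmetric])
  then show ?thesis using herm_eq_hv[OF h] Tm_def by simp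
qed

lemma L_idm: "\<Lambda> idm = hv 1 tv"
proof -
  have h: "herm (\<Lambda> idm)" using herm_pres herm_hv idm_hv by metis
  have "b0 (\<Lambda> idm) = 1" unfolding b0_trace tp by (simp add: b0_trace[symmetric] idm_hv)
  then show ?thesis using herm_eq_hv[OF h] tv_def by simp
qed

lemma L_hv: "\<Lambda> (hv x0 x) = hv x0 (vadd (vsc x0 tv) (Tm x))"
proof -
  have e: "hv x0 x = (\<lambda>i j. complex_of_real x0 * idm i j + complex_of_real 1 * hv 0 x i j)"
    unfolding idm_hv hv_lin by (cases x) simp
  have "\<Lambda> (hv x0 x) = (\<lambda>i j. complex_of_real x0 * \<Lambda> idm i j + complex_of_real 1 * \<Lambda> (hv 0 x) i j)"
    by (subst e) (rule lin)
  also have "\<dots> = hv x0 (vadd (vsc x0 tv) (Tm x))" unfolding L_idm L_hv0 hv_lin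
    by (cases "Tm x") simp
  finally show ?thesis .
qed

lemma Tm_lin: "Tm (vadd (vsc a x) (vsc b y)) = vadd (vsc a (Tm x)) (vsc b (Tm y))"
proof -
  have "\<Lambda> (hv 0 (vadd (vsc a x) (vsc b y))) = \<Lambda> (\<lambda>i j. complex_of_real a * hv 0 x i j + complex_of_real b * hv 0 y i j)"
    unfolding hv_lin by simp
  also have "\<dots> = (\<lambda>i j. complex_of_real a * \<Lambda> (hv 0 x) i j + complex_of_real b * \<Lambda> (hv 0 y) i j)"
    by (rule lin)
  finally show ?thesis unfolding Tm_def by (simp add: bv_lin)
qed

lemma Tm_scale: "Tm (vsc a x) = vsc a (Tm x)"
proof -
  have "Tm (vsc a x) = Tm (vadd (vsc a x) (vsc 0 x))" by (cases x) simp
  also have "\<dots> = vsc a (Tm x)" unfolding Tm_lin by (cases "Tm x") simp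
  finally show ?thesis .
qed

lemma Tm_add: "Tm (vadd x y) = vadd (Tm x) (Tm y)"
proof -
  have "Tm (vadd x y) = Tm (vadd (vsc 1 x) (vsc 1 y))" by (cases x; cases y) simp
  also have "\<dots> = vadd (Tm x) (Tm y)" unfolding Tm_lin by (cases "Tm x"; cases "Tm y") simp
  finally show ?thesis .
qed

lemma Tm_zero: "Tm (V 0 0 0) = V 0 0 0"
  using Tm_scale[of 0 "V 0 0 0"] by (cases "Tm (V 0 0 0)") simp

lemma unital_iff: "unital \<Lambda> \<longleftrightarrow> tv = V 0 0 0"
proof
  assume "unital \<Lambda>"
  then have "hv 1 tv = hv 1 (V 0 0 0)" using L_idm idm_hv by (simp add: unital_def)
  then show "tv = V 0 0 0" by (metis bv_hv)
next
  assume "tv = V 0 0 0" then show "unital \<Lambda>" using L_idm idm_hv by (simp add: unital_def)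
qed

lemma contraction: assumes "unital \<Lambda>" shows "nsq (Tm y) \<le> nsq y"
proof (cases "nsq y = 0")
  case True
  then have "y = V 0 0 0" using nsq_zero_iff by blast
  then show ?thesis using Tm_zero by simp
next
  case False
  define s where "s = sqrt (nsq y)"
  have s0: "s > 0" using False nsq_ge0[of y] by (simp add: s_def)
  have ss: "s\<^sup>2 = nsq y" using nsq_ge0[of y] by (simp add: s_def)
  define u where "u = vsc (1/s) y"
  have nu: "nsq u = 1" using s0 ss False by (simp add: u_def power_divide)
  have "psd (hv (1/2) (vsc (1/2) u))" unfolding psd_hv_iff using nu by (simp add: power_divide)
  then have "psd (\<Lambda> (hv (1/2) (vsc (1/2) u)))" by (rule pos)
  moreover have "tv = V 0 0 0" using assms unital_iff by blast
  ultimately have "psd (hv (1/2) (vsc (1/2) (Tm u)))"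
    unfolding L_hv Tm_scale by (cases "Tm u") simp
  then have "nsq (Tm u) \<le> 1" unfolding psd_hv_iff by (simp add: power_divide)
  moreover have "Tm y = vsc s (Tm u)" unfolding u_def Tm_scale[symmetric] using s0 by (cases y) simp
  ultimately show ?thesis using ss s0 nsq_ge0[of y] by (simp add: mult_left_le)
qed

lemma steered_L: "steered M (id_tensor \<Lambda> \<rho>) = \<Lambda> (steered M \<rho>)"
proof -
  have "\<Lambda> (steered M \<rho>) = (\<lambda>i j. \<Sum>a\<in>UNIV. \<Lambda> (\<lambda>i j. \<Sum>c\<in>UNIV. M a c * \<rho> (c,i) (a,j)) i j)"
    unfolding steered_expl by (rule lin_sum) simp
  also have "\<dots> = (\<lambda>i j. \<Sum>a\<in>UNIV. \<Sum>c\<in>UNIV. \<Lambda> (\<lambda>i j. M a c * \<rho> (c,i) (a,j)) i j)"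
    by (subst lin_sum) simp_all
  also have "\<dots> = (\<lambda>i j. \<Sum>a\<in>UNIV. \<Sum>c\<in>UNIV. M a c * \<Lambda> (\<lambda>i j. \<rho> (c,i) (a,j)) i j)"
    by (subst lin_scale) simp
  also have "\<dots> = steered M (id_tensor \<Lambda> \<rho>)"
    unfolding steered_expl by (simp add: id_tensor_def)
  finally show ?thesis by simp
qed

lemma ptrA_L: "ptrA (id_tensor \<Lambda> \<rho>) = \<Lambda> (ptrA (\<rho>::(bool\<times>bool) cmat))"
proof -
  have "\<Lambda> (ptrA \<rho>) = (\<lambda>i j. \<Sum>a\<in>UNIV. \<Lambda> (\<lambda>i j. \<rho> (a,i) (a,j)) i j)"
    unfolding ptrA_expl by (rule lin_sum) simp
  then show ?thesis unfolding ptrA_expl by (simp add: id_tensor_def)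
qed

lemma prob_L: "prob_M M (id_tensor \<Lambda> \<rho>) = prob_M M \<rho>"
  unfolding prob_steered steered_L tp ..

end




definition Rm :: "bool cvec \<Rightarrow> (bool\<times>bool) cmat \<Rightarrow> bool cmat" where
  "Rm v \<rho> = (\<lambda>c a. \<Sum>i\<in>UNIV. \<Sum>j\<in>UNIV. cnj (v i) * \<rho> (c,i) (a,j) * v j)"

lemma qform_steered:
  "qform_on UNIV (steered M \<rho>) v = (\<Sum>a\<in>UNIV. \<Sum>c\<in>UNIV. M a c * Rm v \<rho> c a)"
  unfolding qform_on_def steered_expl Rm_def by (simp add: sum_bool) (simp add: algebra_simps)

lemma qform_R:
  "qform_on UNIV (Rm v \<rho>) w = qform_on UNIV \<rho> (\<lambda>p. w (fst p) * v (snd p))"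
  unfolding qform_on_def Rm_def by (simp add: sum_bool sum_bool2) (simp add: algebra_simps)

lemma trMR_hv: "(\<Sum>a\<in>UNIV. \<Sum>c\<in>UNIV. hv m0 m a c * hv r0 r c a) = complex_of_real (2 * (m0 * r0 + dot m r))"
  by (cases m; cases r) (simp add: sum_bool hv_ent complex_eq_iff algebra_simps)

lemma sqrt_le_of_psd: "psd (hv x0 x) \<Longrightarrow> sqrt (nsq x) \<le> x0"
  unfolding psd_hv_iff by (metis real_sqrt_abs abs_of_nonneg real_sqrt_le_mono)

lemma trMR:
  fixes M R :: "bool cmat"
  assumes "psd M" "psd R"
  shows "Im (\<Sum>a\<in>UNIV. \<Sum>c\<in>UNIV. M a c * R c a) = 0 \<and> 0 \<le> Re (\<Sum>a\<in>UNIV. \<Sum>c\<in>UNIV. M a c * R c a)"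
proof -
  obtain m0 m where M: "M = hv m0 m" using herm_eq_hv[OF psd_herm[OF assms(1)]] by blast
  obtain r0 r where R: "R = hv r0 r" using herm_eq_hv[OF psd_herm[OF assms(2)]] by blast
  have pM: "psd (hv m0 m)" using M assms(1) by simp
  have pR: "psd (hv r0 r)" using R assms(2) by simp
  have mm: "sqrt (nsq m) \<le> m0" using sqrt_le_of_psd[OF pM] .
  have rr: "sqrt (nsq r) \<le> r0" using sqrt_le_of_psd[OF pR] .
  have "\<bar>dot m r\<bar> \<le> sqrt (nsq m) * sqrt (nsq r)" by (rule abs_dot)
  also have "\<dots> \<le> m0 * r0"
  proof -
    have m0: "0 \<le> m0" using mm real_sqrt_ge_zero[OF nsq_ge0] order_trans by blast
    show ?thesis by (rule mult_mono[OF mm rr m0 real_sqrt_ge_zero[OF nsq_ge0]])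
  qed
  finally have "0 \<le> m0 * r0 + dot m r" by linarith
  then show ?thesis unfolding M R trMR_hv by simp
qed

lemma steered_psd:
  assumes "psd M" "psd \<rho>"
  shows "psd (steered M \<rho>)"
  unfolding psd_on_def
proof (intro allI)
  fix v
  have "psd (Rm v \<rho>)" unfolding psd_on_def qform_R using assms(2) by (simp add: psd_on_def)
  then show "Im (qform_on UNIV (steered M \<rho>) v) = 0 \<and> 0 \<le> Re (qform_on UNIV (steered M \<rho>) v)"
    unfolding qform_steered using trMR assms(1) by blast
qed

lemma coh_bound:
  assumes "orthonormal_basis \<xi>" "psd X"
  shows "(\<Sum>(i, j)\<in>{(i, j). i \<noteq> j}. cmod (sandwich (\<xi> i) X (\<xi> j))) \<le> Re (trace X)"
proof -
  have h: "herm X" using psd_herm assms(2) by blast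
  have X: "X = hv (b0 X) (bv X)" using herm_eq_hv h by blast
  have p: "psd (hv (b0 X) (bv X))" using X assms(2) by simp
  have "sqrt (nsq (bv X) - (dot (bv X) (nv (\<xi> False)))\<^sup>2) \<le> sqrt (nsq (bv X))" by simp
  also have "\<dots> \<le> b0 X" by (rule sqrt_le_of_psd[OF p])
  finally show ?thesis unfolding coh_formula[OF assms(1) h] b0_trace by simp
qed

definition val :: "(bool\<times>bool) cmat \<Rightarrow> (bool \<Rightarrow> bool cvec) \<Rightarrow> bool cmat \<Rightarrow> real" where
  "val \<rho> \<xi> M = (1 / prob_M M \<rho>) *
            (\<Sum>(i, j)\<in>{(i, j). i \<noteq> j}. cmod (sandwich (\<xi> i) (steered M \<rho>) (\<xi> j)))"
definition Ms :: "(bool\<times>bool) cmat \<Rightarrow> bool cmat set" where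
  "Ms \<rho> = {M. povm_elem M \<and> prob_M M \<rho> > 0}"
definition Sv :: "(bool\<times>bool) cmat \<Rightarrow> (bool \<Rightarrow> bool cvec) \<Rightarrow> real" where
  "Sv \<rho> \<xi> = (SUP M\<in>Ms \<rho>. val \<rho> \<xi> M)"
definition Eb :: "(bool\<times>bool) cmat \<Rightarrow> (bool \<Rightarrow> bool cvec) set" where
  "Eb \<rho> = {\<xi>. eigenbasis (ptrA \<rho>) \<xi>}"
definition good :: "(bool\<times>bool) cmat \<Rightarrow> bool" where
  "good \<rho> \<longleftrightarrow> (\<forall>M. povm_elem M \<longrightarrow> psd (steered M \<rho>))"

lemma sc_unfold: "steered_coherence \<rho> = (INF \<xi>\<in>Eb \<rho>. Sv \<rho> \<xi>)"
  unfolding steered_coherence_def Sv_def val_def Ms_def Eb_def ..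

lemma val_bounds:
  assumes "good \<rho>" "orthonormal_basis \<xi>" "M \<in> Ms \<rho>"
  shows "0 \<le> val \<rho> \<xi> M" "val \<rho> \<xi> M \<le> 1"
proof -
  have p: "prob_M M \<rho> > 0" "povm_elem M" using assms(3) by (auto simp: Ms_def)
  have ps: "psd (steered M \<rho>)" using assms(1) p(2) by (simp add: good_def)
  have "(\<Sum>(i, j)\<in>{(i, j). i \<noteq> j}. cmod (sandwich (\<xi> i) (steered M \<rho>) (\<xi> j))) \<le> prob_M M \<rho>"
    unfolding prob_steered by (rule coh_bound[OF assms(2) ps])
  then show "val \<rho> \<xi> M \<le> 1" using p(1) by (simp add: val_def)
  show "0 \<le> val \<rho> \<xi> M" using p(1) by (simp add: val_def sum_nonneg case_prod_beta)
qed

lemma Sv_bounds: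
  assumes "good \<rho>" "orthonormal_basis \<xi>" "Ms \<rho> \<noteq> {}"
  shows "bdd_above (val \<rho> \<xi> ` Ms \<rho>)" "0 \<le> Sv \<rho> \<xi>" "Sv \<rho> \<xi> \<le> 1"
proof -
  have "\<forall>y\<in>val \<rho> \<xi> ` Ms \<rho>. y \<le> 1" using val_bounds[OF assms(1,2)] by auto
  then show b: "bdd_above (val \<rho> \<xi> ` Ms \<rho>)" by (auto simp: bdd_above_def)
  obtain M where M: "M \<in> Ms \<rho>" using assms(3) by blast
  have "val \<rho> \<xi> M \<le> Sv \<rho> \<xi>" unfolding Sv_def using M b by (rule cSUP_upper)
  then show "0 \<le> Sv \<rho> \<xi>" using val_bounds[OF assms(1,2) M] by linarith
  show "Sv \<rho> \<xi> \<le> 1" unfolding Sv_def using assms(3) val_bounds[OF assms(1,2)] by (simp add: cSUP_least)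
qed

lemma Eb_onb: "\<xi> \<in> Eb \<rho> \<Longrightarrow> orthonormal_basis \<xi>" by (simp add: Eb_def eigenbasis_def)

lemma C_bdd:
  assumes "good \<rho>" "Ms \<rho> \<noteq> {}"
  shows "bdd_below (Sv \<rho> ` Eb \<rho>)"
proof -
  have "\<forall>y\<in>Sv \<rho> ` Eb \<rho>. 0 \<le> y" using Sv_bounds(2)[OF assms(1) Eb_onb assms(2)] by auto
  then show ?thesis by (auto simp: bdd_below_def)
qed

lemma C_nonneg:
  assumes "good \<rho>" "Ms \<rho> \<noteq> {}" "Eb \<rho> \<noteq> {}"
  shows "0 \<le> steered_coherence \<rho>"
  unfolding sc_unfold using Sv_bounds(2)[OF assms(1) Eb_onb assms(2)] assms(3) by (simp add: cINF_greatest)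

lemma C_le:
  assumes "good \<rho>" "Ms \<rho> \<noteq> {}" "\<xi> \<in> Eb \<rho>"
  shows "steered_coherence \<rho> \<le> Sv \<rho> \<xi>"
  unfolding sc_unfold using C_bdd[OF assms(1,2)] assms(3) by (rule cINF_lower)

lemma psd_idm: "psd (idm::bool cmat)" using psd_hv_iff[of 1 "V 0 0 0"] by (simp add: idm_hv nsq_def)

lemma povm_idm: "povm_elem (idm::bool cmat)"
proof -
  have "(\<lambda>i j. idm i j - idm i j) = hv 0 (V 0 0 0)" by (intro ext) (auto simp: hv_def complex_eq_iff)
  then show ?thesis unfolding povm_elem_def using psd_idm psd_hv_iff by (simp add: nsq_def)
qed

lemma density_good: "density \<rho> \<Longrightarrow> good \<rho>"
  by (simp add: good_def density_def povm_elem_def steered_psd)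

lemma density_Ms: fixes \<rho> :: "(bool\<times>bool) cmat" assumes "density \<rho>" shows "idm \<in> Ms \<rho>"
proof -
  have "prob_M idm \<rho> = 1" using assms by (simp add: prob_steered steered_idm trace_ptrA density_def)
  then show ?thesis using povm_idm by (simp add: Ms_def)
qed

lemma density_ptrA: fixes \<rho> :: "(bool\<times>bool) cmat" assumes "density \<rho>" shows "psd (ptrA \<rho>)"
proof -
  have "psd (steered idm \<rho>)" using steered_psd[OF psd_idm] assms by (simp add: density_def)
  then show ?thesis by (simp add: steered_idm)
qed

lemma density_Eb: fixes \<rho> :: "(bool\<times>bool) cmat" assumes "density \<rho>" shows "Eb \<rho> \<noteq> {}"
  using eig_exists[OF psd_herm[OF density_ptrA[OF assms]]] by (simp add: Eb_def)

context
  fixes \<Lambda> :: "bool cmat \<Rightarrow> bool cmat"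
  assumes ch: "qubit_channel \<Lambda>"
begin

lemma out_good: fixes \<rho> :: "(bool\<times>bool) cmat" shows "density \<rho> \<Longrightarrow> good (id_tensor \<Lambda> \<rho>)"
  using density_good[of \<rho>] pos[OF ch] steered_L[OF ch] by (simp add: good_def)

lemma out_Ms: fixes \<rho> :: "(bool\<times>bool) cmat" shows "Ms (id_tensor \<Lambda> \<rho>) = Ms \<rho>"
  by (simp add: Ms_def prob_L[OF ch])

lemma out_ptrA: fixes \<rho> :: "(bool\<times>bool) cmat" assumes d: "density \<rho>" shows "psd (ptrA (id_tensor \<Lambda> \<rho>))"
proof -
  have "psd (\<Lambda> (ptrA \<rho>))" using pos[OF ch density_ptrA[OF d]] .
  then show ?thesis by (simp add: ptrA_L[OF ch])
qed

lemma out_Eb: fixes \<rho> :: "(bool\<times>bool) cmat" shows "density \<rho> \<Longrightarrow> Eb (id_tensor \<Lambda> \<rho>) \<noteq> {}"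
  using eig_exists[OF psd_herm[OF out_ptrA]] by (simp add: Eb_def)

end




lemma nsq_vadd: "nsq (vadd a b) = nsq a + 2 * dot a b + nsq b"
  by (cases a; cases b) (simp add: nsq_def algebra_simps)

lemma gram: assumes "nsq m = 1"
  shows "nsq (vadd (vsc l m) w) - (dot (vadd (vsc l m) w) m)\<^sup>2 = nsq w - (dot w m)\<^sup>2"
proof -
  have "dot m m = 1" using assms by (simp add: nsq_def)
  then show ?thesis unfolding nsq_vadd by (simp add: nsq_def dot_comm[of m w] power2_eq_square algebra_simps)
qed

lemma cross_par: "cross (vsc a y) (vsc b y) = V 0 0 0" by (cases y) (simp add: algebra_simps)

lemma vadd_zero: "vadd (V 0 0 0) y = y" by (cases y) simp
lemma vsc_zero: "vsc a (V 0 0 0) = V 0 0 0" by simp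

lemma coh_val:
  assumes "orthonormal_basis \<xi>" "steered M \<rho> = hv x0 x"
  shows "val \<rho> \<xi> M = (1 / prob_M M \<rho>) * (2 * sqrt (nsq x - (dot x (nv (\<xi> False)))\<^sup>2))"
  unfolding val_def assms(2) coh_formula[OF assms(1) herm_hv] by simp

context
  fixes \<Lambda> :: "bool cmat \<Rightarrow> bool cmat"
  assumes ch: "qubit_channel \<Lambda>" and un: "unital \<Lambda>"
begin

lemma tv0: "tv \<Lambda> = V 0 0 0" using unital_iff[OF ch] un by blast

lemma L_hv_u: "\<Lambda> (hv x0 x) = hv x0 (Tm \<Lambda> x)"
  unfolding L_hv[OF ch] tv0 by (simp add: vadd_zero)

lemma unital_step:
  fixes \<rho> :: "(bool\<times>bool) cmat"
  assumes d: "density \<rho>" and xi: "\<xi> \<in> Eb \<rho>"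
  shows "\<exists>\<eta>\<in>Eb (id_tensor \<Lambda> \<rho>). \<forall>M\<in>Ms \<rho>. val (id_tensor \<Lambda> \<rho>) \<eta> M \<le> val \<rho> \<xi> M"
proof -
  have on: "orthonormal_basis \<xi>" using xi by (rule Eb_onb)
  define n where "n = nv (\<xi> False)"
  have nn: "nsq n = 1" unfolding n_def using onb_char(1)[OF on] by (rule nsq_nv1)
  obtain r0 r where N: "ptrA \<rho> = hv r0 r" using herm_eq_hv[OF psd_herm[OF density_ptrA[OF d]]] by blast
  have crn: "cross r n = V 0 0 0" using eig_a[OF psd_herm[OF density_ptrA[OF d]]] xi N
    by (simp add: Eb_def n_def)
  define tn where "tn = Tm \<Lambda> n"
  define m where "m = (if nsq tn = 0 then n else vsc (1 / sqrt (nsq tn)) tn)"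
  have nm: "nsq m = 1" using nn nsq_ge0[of tn] by (simp add: m_def power_divide)
  have tnm: "\<exists>s. tn = vsc s m"
  proof (cases "nsq tn = 0")
    case True then show ?thesis using nsq_zero_iff by (intro exI[of _ 0]) (cases n, simp add: m_def)
  next
    case False
    then have "sqrt (nsq tn) \<noteq> 0" by simp
    then have "tn = vsc (sqrt (nsq tn)) m" unfolding m_def using False by (cases tn) simp
    then show ?thesis by blast
  qed
  then obtain s where s: "tn = vsc s m" by blast
  obtain \<eta> where eta: "orthonormal_basis \<eta>" "nv (\<eta> False) = m" using axis_basis[OF nm] by blast
  have rr: "r = vsc (dot r n) n" by (rule vec_par[OF nn crn])
  have Tr: "Tm \<Lambda> r = vsc (dot r n * s) m"
    by (subst rr) (simp add: Tm_scale[OF ch] tn_def[symmetric] s, cases m, simp)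
  have "ptrA (id_tensor \<Lambda> \<rho>) = hv r0 (Tm \<Lambda> r)" unfolding ptrA_L[OF ch] N L_hv_u ..
  moreover have "cross (Tm \<Lambda> r) (nv (\<eta> False)) = V 0 0 0" unfolding Tr eta(2)
    using cross_par[of "dot r n * s" m 1] by (cases m) simp
  ultimately have etaE: "\<eta> \<in> Eb (id_tensor \<Lambda> \<rho>)" using eig_b[OF eta(1)] by (simp add: Eb_def)
  have "\<forall>M\<in>Ms \<rho>. val (id_tensor \<Lambda> \<rho>) \<eta> M \<le> val \<rho> \<xi> M"
  proof
    fix M assume M: "M \<in> Ms \<rho>"
    have p: "prob_M M \<rho> > 0" "povm_elem M" using M by (auto simp: Ms_def)
    have ps: "psd (steered M \<rho>)" using density_good[OF d] p(2) by (simp add: good_def)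
    obtain x0 x where X: "steered M \<rho> = hv x0 x" using herm_eq_hv[OF psd_herm[OF ps]] by blast
    have X': "steered M (id_tensor \<Lambda> \<rho>) = hv x0 (Tm \<Lambda> x)" unfolding steered_L[OF ch] X L_hv_u ..
    define dd where "dd = dot x n"
    define y where "y = vadd x (vsc (- dd) n)"
    have xy: "x = vadd (vsc dd n) y" unfolding y_def by (cases x; cases n) simp
    have yn: "dot y n = 0" unfolding y_def dd_def using nn by (simp add: nsq_def)
    have "nsq x - (dot x n)\<^sup>2 = nsq y - (dot y n)\<^sup>2" by (subst (1 2) xy) (rule gram[OF nn])
    then have ex: "nsq x - (dot x n)\<^sup>2 = nsq y" using yn by simp
    have Tx: "Tm \<Lambda> x = vadd (vsc (dd * s) m) (Tm \<Lambda> y)"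
      by (subst xy) (simp add: Tm_add[OF ch] Tm_scale[OF ch] tn_def[symmetric] s, cases m, simp add: mult.assoc)
    have "nsq (Tm \<Lambda> x) - (dot (Tm \<Lambda> x) m)\<^sup>2 = nsq (Tm \<Lambda> y) - (dot (Tm \<Lambda> y) m)\<^sup>2"
      unfolding Tx by (rule gram[OF nm])
    also have "\<dots> \<le> nsq (Tm \<Lambda> y)" by simp
    also have "\<dots> \<le> nsq y" by (rule contraction[OF ch un])
    finally have ineq: "nsq (Tm \<Lambda> x) - (dot (Tm \<Lambda> x) m)\<^sup>2 \<le> nsq x - (dot x n)\<^sup>2" using ex by simp
    have "val (id_tensor \<Lambda> \<rho>) \<eta> M = (1 / prob_M M \<rho>) * (2 * sqrt (nsq (Tm \<Lambda> x) - (dot (Tm \<Lambda> x) m)\<^sup>2))"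
      using coh_val[OF eta(1) X'] eta(2) prob_L[OF ch] by simp
    also have "\<dots> \<le> (1 / prob_M M \<rho>) * (2 * sqrt (nsq x - (dot x n)\<^sup>2))"
      using ineq p(1) by (simp add: divide_right_mono)
    also have "\<dots> = val \<rho> \<xi> M" using coh_val[OF on X] n_def by simp
    finally show "val (id_tensor \<Lambda> \<rho>) \<eta> M \<le> val \<rho> \<xi> M" .
  qed
  then show ?thesis using etaE by blast
qed

theorem unital_mono:
  fixes \<rho> :: "(bool\<times>bool) cmat"
  assumes d: "density \<rho>"
  shows "steered_coherence (id_tensor \<Lambda> \<rho>) \<le> steered_coherence \<rho>"
proof -
  have Ms: "Ms \<rho> \<noteq> {}" using density_Ms[OF d] by blast
  have "steered_coherence (id_tensor \<Lambda> \<rho>) \<le> Sv \<rho> \<xi>" if xi: "\<xi> \<in> Eb \<rho>" for \<xi>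
  proof -
    obtain \<eta> where eta: "\<eta> \<in> Eb (id_tensor \<Lambda> \<rho>)" "\<forall>M\<in>Ms \<rho>. val (id_tensor \<Lambda> \<rho>) \<eta> M \<le> val \<rho> \<xi> M"
      using unital_step[OF d xi] by blast
    have "steered_coherence (id_tensor \<Lambda> \<rho>) \<le> Sv (id_tensor \<Lambda> \<rho>) \<eta>"
      using C_le[OF out_good[OF ch d] _ eta(1)] Ms out_Ms[OF ch] by simp
    also have "\<dots> \<le> Sv \<rho> \<xi>"
    proof -
      have b: "bdd_above (val \<rho> \<xi> ` Ms \<rho>)" using Sv_bounds(1)[OF density_good[OF d] Eb_onb[OF xi] Ms] .
      have "Sv (id_tensor \<Lambda> \<rho>) \<eta> = (SUP M\<in>Ms \<rho>. val (id_tensor \<Lambda> \<rho>) \<eta> M)"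
        unfolding Sv_def out_Ms[OF ch] ..
      also have "\<dots> \<le> Sv \<rho> \<xi>" unfolding Sv_def
      proof (rule cSUP_least[OF Ms])
        fix M assume "M \<in> Ms \<rho>"
        then show "val (id_tensor \<Lambda> \<rho>) \<eta> M \<le> (SUP M\<in>Ms \<rho>. val \<rho> \<xi> M)"
          using eta(2) cSUP_upper[OF _ b] order_trans by blast
      qed
      finally show ?thesis .
    qed
    finally show ?thesis .
  qed
  then show ?thesis unfolding sc_unfold[of \<rho>] using density_Eb[OF d] by (simp add: cINF_greatest)
qed

end




definition projsum :: "(bool \<Rightarrow> real) \<Rightarrow> (bool \<Rightarrow> bool cvec) \<Rightarrow> bool cmat" where
  "projsum p e = (\<lambda>i j. \<Sum>k\<in>UNIV. complex_of_real (p k) * e k i * cnj (e k j))"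

lemma sandwich_projsum: "sandwich u (projsum p e) w = (\<Sum>k\<in>UNIV. complex_of_real (p k) * inner u (e k) * inner (e k) w)"
  by (simp add: projsum_def sandwich_def sum_bool inner_ab algebra_simps)

lemma onb_inner: "orthonormal_basis e \<Longrightarrow> inner (e k) (e l) = (if k = l then 1 else 0)"
  by (simp add: orthonormal_basis_def)

lemma sandwich_projsum_off:
  assumes "orthonormal_basis e" "i \<noteq> j"
  shows "sandwich (e i) (projsum p e) (e j) = 0"
  unfolding sandwich_projsum using assms by (cases i; cases j) (simp_all add: sum_bool onb_inner)

lemma mat_vec_projsum:
  assumes "orthonormal_basis e"
  shows "mat_vec (projsum p e) (e l) = (\<lambda>i. complex_of_real (p l) * e l i)"
proof
  fix i
  have "mat_vec (projsum p e) (e l) i = (\<Sum>k\<in>UNIV. complex_of_real (p k) * e k i * inner (e k) (e l))"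
    by (simp add: projsum_def mat_vec_bool sum_bool inner_ab algebra_simps)
  then show "mat_vec (projsum p e) (e l) i = complex_of_real (p l) * e l i"
    using assms by (cases l) (simp_all add: sum_bool onb_inner)
qed

lemma sandwich_scale2: "sandwich u (\<lambda>i j. c * A i j) w = c * sandwich u (A::bool cmat) w"
  by (simp add: sandwich_def sum_bool algebra_simps)

lemma qform_scale: "qform_on UNIV (\<lambda>i j. c * A i j) v = c * qform_on UNIV (A::bool cmat) v"
  by (simp add: qform_on_def sum_bool algebra_simps)

lemma trace_hv: "trace (hv x0 x) = complex_of_real (2 * x0)"
  by (cases x) (simp add: trace_bool hv_ent)

lemma scaled_density:
  fixes X :: "bool cmat"
  assumes "psd X" "Re (trace X) > 0"
  shows "density (\<lambda>i j. complex_of_real (1 / Re (trace X)) * X i j)"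
    "X = (\<lambda>i j. complex_of_real (Re (trace X)) * (\<lambda>i j. complex_of_real (1 / Re (trace X)) * X i j) i j)"
proof -
  define p where "p = Re (trace X)"
  have tX: "trace X = complex_of_real p"
    using herm_eq_hv[OF psd_herm[OF assms(1)]] trace_hv p_def by (metis Re_complex_of_real)
  show "density (\<lambda>i j. complex_of_real (1 / Re (trace X)) * X i j)"
    unfolding density_def p_def[symmetric]
  proof
    show "psd (\<lambda>i j. complex_of_real (1 / p) * X i j)"
      unfolding psd_on_def qform_scale using assms(1) p_def assms(2)
      by (simp add: psd_on_def)
    have "trace (\<lambda>i j. complex_of_real (1 / p) * X i j) = complex_of_real (1 / p) * trace X"
      by (simp add: trace_bool distrib_left)
    also have "\<dots> = complex_of_real (1 / p) * complex_of_real p" by (simp only: tX)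
    also have "\<dots> = 1" using assms(2) p_def by (simp flip: of_real_mult)
    finally show "trace (\<lambda>i j. complex_of_real (1 / p) * X i j) = 1" .
  qed
  show "X = (\<lambda>i j. complex_of_real (Re (trace X)) * (\<lambda>i j. complex_of_real (1 / Re (trace X)) * X i j) i j)"
    using assms(2) by (simp add: mult.assoc[symmetric] of_real_mult[symmetric])
qed

context
  fixes \<Lambda> :: "bool cmat \<Rightarrow> bool cmat"
  assumes ch: "qubit_channel \<Lambda>" and sc: "semi_classical \<Lambda>"
begin

theorem sc_mono:
  fixes \<rho> :: "(bool\<times>bool) cmat"
  assumes d: "density \<rho>"
  shows "steered_coherence (id_tensor \<Lambda> \<rho>) \<le> steered_coherence \<rho>"
proof -
  obtain e where e: "orthonormal_basis e"
    and P: "\<And>\<sigma>. density \<sigma> \<Longrightarrow> \<exists>p. (\<forall>k. p k \<ge> 0) \<and> (\<Sum>k\<in>UNIV. p k) = 1 \<and> \<Lambda> \<sigma> = projsum p e"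
    using sc unfolding semi_classical_def projsum_def by blast
  have Ms: "Ms \<rho> \<noteq> {}" using density_Ms[OF d] by blast
  have C0: "0 \<le> steered_coherence \<rho>" using C_nonneg[OF density_good[OF d] Ms density_Eb[OF d]] .
  have dp: "density (ptrA \<rho>)" using density_ptrA[OF d] d by (simp add: density_def trace_ptrA)
  obtain q where q: "\<Lambda> (ptrA \<rho>) = projsum q e" using P[OF dp] by blast
  have eE: "e \<in> Eb (id_tensor \<Lambda> \<rho>)"
    unfolding Eb_def eigenbasis_def using e by (simp add: ptrA_L[OF ch] q mat_vec_projsum) blast
  have v0: "val (id_tensor \<Lambda> \<rho>) e M = 0" if M: "M \<in> Ms \<rho>" for M
  proof -
    have pM: "povm_elem M" "prob_M M \<rho> > 0" using M by (auto simp: Ms_def)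
    define X where "X = steered M \<rho>"
    have ps: "psd X" using density_good[OF d] pM(1) by (simp add: good_def X_def)
    have pp: "Re (trace X) > 0" using pM(2) by (simp add: prob_steered X_def)
    define c where "c = Re (trace X)"
    define Y where "Y = (\<lambda>i j. complex_of_real (1 / c) * X i j)"
    have c0: "c > 0" using pp c_def by simp
    have dY: "density Y" unfolding Y_def c_def using scaled_density(1)[OF ps pp] .
    obtain p where p: "\<Lambda> Y = projsum p e" using P[OF dY] by blast
    have XY: "X = (\<lambda>i j. complex_of_real c * Y i j)"
      using c0 by (intro ext) (simp add: Y_def mult.assoc[symmetric] flip: of_real_mult)
    have "steered M (id_tensor \<Lambda> \<rho>) = \<Lambda> X" unfolding steered_L[OF ch] X_def ..
    also have "\<dots> = (\<lambda>i j. complex_of_real c * projsum p e i j)"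
      unfolding XY lin_scale[OF ch] p ..
    finally have S: "steered M (id_tensor \<Lambda> \<rho>) = (\<lambda>i j. complex_of_real c * projsum p e i j)" .
    have "(\<Sum>(i, j)\<in>{(i, j). i \<noteq> j}. cmod (sandwich (e i) (steered M (id_tensor \<Lambda> \<rho>)) (e j))) = 0"
      unfolding S sandwich_scale2 pairs_neq
      using sandwich_projsum_off[OF e, of False True p] sandwich_projsum_off[OF e, of True False p] by simp
    then show ?thesis by (simp add: val_def)
  qed
  have "steered_coherence (id_tensor \<Lambda> \<rho>) \<le> Sv (id_tensor \<Lambda> \<rho>) e"
    using C_le[OF out_good[OF ch d] _ eE] Ms out_Ms[OF ch] by simp
  also have "Sv (id_tensor \<Lambda> \<rho>) e = 0"
  proof -
    have "Sv (id_tensor \<Lambda> \<rho>) e = (SUP M\<in>Ms \<rho>. (0::real))"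
      unfolding Sv_def out_Ms[OF ch] using v0 by (intro SUP_cong) auto
    also have "\<dots> = 0" using Ms by simp
    finally show ?thesis .
  qed
  finally show ?thesis using C0 by linarith
qed

end




lemma cross_add2: "cross a (vadd b c) = vadd (cross a b) (cross a c)"
  by (cases a; cases b; cases c) (simp add: algebra_simps)
lemma cross_add1: "cross (vadd b c) a = vadd (cross b a) (cross c a)"
  by (cases a; cases b; cases c) (simp add: algebra_simps)
lemma cross_sc2: "cross a (vsc k b) = vsc k (cross a b)"
  by (cases a; cases b) (simp add: algebra_simps)
lemma cross_sc1: "cross (vsc k a) b = vsc k (cross a b)"
  by (cases a; cases b) (simp add: algebra_simps)
lemma cross_anti: "cross a b = vsc (-1) (cross b a)"
  by (cases a; cases b) (simp add: algebra_simps)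
lemma cross_aa: "cross a a = V 0 0 0" by (cases a) (simp add: algebra_simps)
lemma vadd_00: "vadd (V 0 0 0) (V 0 0 0) = V 0 0 0" by simp
lemma vsc_00: "vsc k (V 0 0 0) = V 0 0 0" by simp

definition Pm :: "bool cvec \<Rightarrow> bool cmat" where "Pm w = (\<lambda>i j. w i * cnj (w j))"

lemma Pm_hv: "Pm w = hv (nv2 w / 2) (vsc (1/2) (nv w))"
proof (intro ext)
  fix i j
  obtain a1 a2 where a: "w False = Complex a1 a2" by (metis complex.exhaust)
  obtain c1 c2 where cc: "w True = Complex c1 c2" by (metis complex.exhaust)
  have 1: "nv2 w = a1*a1 + a2*a2 + c1*c1+c2*c2" by (simp add: nv2_def csq_def a cc power2_eq_square)
  have 2: "nv w = V (2*(c1*a1 + c2*a2)) (2*(c2*a1 - c1*a2)) (a1*a1+a2*a2 - c1*c1-c2*c2)"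
    by (simp add: nv_def csq_def a cc power2_eq_square)
  show "Pm w i j = hv (nv2 w / 2) (vsc (1/2) (nv w)) i j"
    unfolding 1 2 by (cases i; cases j) (simp_all add: Pm_def hv_ent a cc complex_eq_iff field_simps)
qed

lemma psd_Pm: "psd (Pm w)"
  unfolding Pm_hv psd_hv_iff using nv2_ge0[of w] by (simp add: nsq_nv power_divide)

lemma sandwich_Pm: "sandwich a (Pm w) b = inner a w * inner w b"
  by (simp add: Pm_def sandwich_def sum_bool inner_ab algebra_simps)

lemma decomp:
  assumes "nv2 v = 1"
  shows "hv x0 (vsc s (nv v)) = (\<lambda>i j. complex_of_real (x0 + s) * Pm v i j + complex_of_real (x0 - s) * Pm (perp v) i j)"
proof -
  have "(\<lambda>i j. complex_of_real (x0 + s) * Pm v i j + complex_of_real (x0 - s) * Pm (perp v) i j)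
     = hv ((x0 + s) * (1/2) + (x0 - s) * (1/2)) (vadd (vsc (x0 + s) (vsc (1/2) (nv v))) (vsc (x0 - s) (vsc (1/2) (vsc (-1) (nv v)))))"
    unfolding Pm_hv nv2_perp nv_perp assms hv_lin by simp
  also have "\<dots> = hv x0 (vsc s (nv v))" by (cases "nv v") (rule arg_cong2[where f=hv], simp_all add: field_simps)
  finally show ?thesis by simp
qed

lemma Pm_scale: "cmod c = 1 \<Longrightarrow> Pm (\<lambda>k. c * w k) = Pm w"
proof -
  assume "cmod c = 1"
  then have "c * cnj c = 1" using complex_norm_square[of c] by simp
  then show ?thesis by (intro ext) (simp add: Pm_def algebra_simps)
qed

context
  fixes \<Lambda> :: "bool cmat \<Rightarrow> bool cmat"
  assumes ch: "qubit_channel \<Lambda>"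
begin

lemma density_hv: assumes "density \<sigma>" shows "\<sigma> = hv (1/2) (bv \<sigma>)"
proof -
  have "\<sigma> = hv (b0 \<sigma>) (bv \<sigma>)" using herm_eq_hv psd_herm assms by (simp add: density_def)
  moreover have "b0 \<sigma> = 1/2" using assms by (simp add: density_def b0_trace)
  ultimately show ?thesis by simp
qed

lemma sc_from_par:
  assumes t0: "tv \<Lambda> \<noteq> V 0 0 0"
    and h1: "cross (tv \<Lambda>) (Tm \<Lambda> (V 1 0 0)) = V 0 0 0"
    and h2: "cross (tv \<Lambda>) (Tm \<Lambda> (V 0 1 0)) = V 0 0 0"
    and h3: "cross (tv \<Lambda>) (Tm \<Lambda> (V 0 0 1)) = V 0 0 0"
  shows "semi_classical \<Lambda>"
proof -
  define t where "t = tv \<Lambda>"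
  have nt: "nsq t > 0" using t0 nsq_ge0[of t] nsq_zero_iff[of t] by (simp add: t_def)
  define m where "m = vsc (1 / sqrt (nsq t)) t"
  have nm: "nsq m = 1" using nt by (simp add: m_def power_divide)
  obtain e where e: "orthonormal_basis e" "nv (e False) = m" using axis_basis[OF nm] by blast
  have n1: "nv2 (e False) = 1" using onb_char(1)[OF e(1)] .
  obtain c where c: "cmod c = 1" "e True = (\<lambda>k. c * perp (e False) k)" using onb_char(2)[OF e(1)] by blast
  have "\<exists>p. (\<forall>k. p k \<ge> 0) \<and> (\<Sum>k\<in>UNIV. p k) = 1 \<and> \<Lambda> \<sigma> = projsum p e" if d: "density \<sigma>" for \<sigma>
  proof -
    obtain r1 r2 r3 where r: "bv \<sigma> = V r1 r2 r3" by (cases "bv \<sigma>")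
    have rr: "V r1 r2 r3 = vadd (vadd (vsc r1 (V 1 0 0)) (vsc r2 (V 0 1 0))) (vsc r3 (V 0 0 1))" by simp
    have Tr: "Tm \<Lambda> (V r1 r2 r3) = vadd (vadd (vsc r1 (Tm \<Lambda> (V 1 0 0))) (vsc r2 (Tm \<Lambda> (V 0 1 0)))) (vsc r3 (Tm \<Lambda> (V 0 0 1)))"
      by (subst rr, simp only: Tm_add[OF ch] Tm_scale[OF ch])
    define w where "w = vadd (vsc (1/2) t) (Tm \<Lambda> (V r1 r2 r3))"
    have Ls: "\<Lambda> \<sigma> = hv (1/2) w" using density_hv[OF d] L_hv[OF ch] r by (simp add: w_def t_def)
    have "cross t w = V 0 0 0" unfolding w_def Tr cross_add2 cross_sc2 using h1 h2 h3
      by (simp add: t_def cross_aa)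
    then have "cross w m = V 0 0 0" unfolding m_def cross_sc2 by (subst cross_anti) simp
    then have wm: "w = vsc (dot w m) m" by (rule vec_par[OF nm])
    define s where "s = dot w m"
    have Ls2: "\<Lambda> \<sigma> = hv (1/2) (vsc s (nv (e False)))" using Ls wm e(2) s_def by simp
    have "psd (\<Lambda> \<sigma>)" using pos[OF ch] d by (simp add: density_def)
    then have "nsq (vsc s (nv (e False))) \<le> (1/2)\<^sup>2" unfolding Ls2 psd_hv_iff by simp
    then have "s\<^sup>2 \<le> (1/2)\<^sup>2" using nsq_nv1[OF n1] by simp
    then have sb: "\<bar>s\<bar> \<le> 1/2" using abs_le_square_iff by (metis abs_of_nonneg le_divide_eq_1_pos zero_le_numeral zero_less_numeral abs_numeral abs_divide abs_one)
    define p where "p = (\<lambda>k. if k then 1/2 - s else 1/2 + s)"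
    have cc0: "c * cnj c = 1" using c(1) complex_norm_square[of c] by simp
    have cc1: "c * (cnj c * z) = z" for z using cc0 by (simp add: mult.assoc[symmetric])
    have "\<Lambda> \<sigma> = projsum p e"
      unfolding Ls2 decomp[OF n1]
      by (intro ext) (simp add: projsum_def sum_bool p_def c Pm_def algebra_simps cc1)
    moreover have "\<forall>k. p k \<ge> 0" using sb by (auto simp: p_def abs_le_iff)
    moreover have "(\<Sum>k\<in>UNIV. p k) = 1" by (simp add: p_def sum_bool)
    ultimately show ?thesis by blast
  qed
  then show ?thesis unfolding semi_classical_def projsum_def using e(1) by blast
qed

end




lemma sandwich_lin: "sandwich u (\<lambda>i j. a * A i j + b * B i j) w = a * sandwich u A w + b * sandwich u (B::bool cmat) w"
  by (simp add: sandwich_def sum_bool algebra_simps)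

lemma hv_scale: "(\<lambda>i j. complex_of_real a * hv p x i j) = hv (a*p) (vsc a x)"
  by (cases x) (intro ext, auto simp: hv_def complex_eq_iff algebra_simps)

lemma trace_Pm: "trace (Pm w) = complex_of_real (nv2 w)"
  unfolding Pm_hv trace_hv by simp

definition M0 :: "bool cmat" where "M0 = (\<lambda>a c. if a = False \<and> c = False then 1 else 0)"

lemma M0_hv: "M0 = hv (1/2) (V 0 0 (1/2))"
  by (intro ext) (auto simp: M0_def hv_def complex_eq_iff)

lemma povm_M0: "povm_elem M0"
proof -
  have "(\<lambda>i j. idm i j - M0 i j) = hv (1/2) (V 0 0 (-1/2))"
    by (intro ext) (auto simp: M0_def idm_def hv_def complex_eq_iff)
  then show ?thesis unfolding povm_elem_def M0_hv using psd_hv_iff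
    by (simp add: nsq_def power2_eq_square)
qed

definition wit :: "bool cvec \<Rightarrow> (bool\<times>bool) cmat" where
  "wit v = (\<lambda>p q. if fst p = fst q then (if fst p then complex_of_real (1/2) * Pm (perp v) (snd p) (snd q)
       else complex_of_real (1/2) * Pm v (snd p) (snd q)) else 0)"

lemma qform_wit: "qform_on UNIV (wit v) U = complex_of_real (1/2) * qform_on UNIV (Pm v) (\<lambda>i. U (False,i))
   + complex_of_real (1/2) * qform_on UNIV (Pm (perp v)) (\<lambda>i. U (True,i))"
  by (simp add: qform_on_def sum_bool2 sum_bool wit_def algebra_simps)

lemma density_wit: assumes "nv2 v = 1" shows "density (wit v)"
  unfolding density_def
proof
  show "psd (wit v)" unfolding psd_on_def qform_wit
    using psd_Pm[of v] psd_Pm[of "perp v"] by (simp add: psd_on_def)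
  have a: "Pm v False False + Pm v True True = 1" using trace_Pm[of v] assms by (simp add: trace_bool)
  have b: "Pm (perp v) False False + Pm (perp v) True True = 1" using trace_Pm[of "perp v"] assms by (simp add: trace_bool)
  have "trace (wit v) = (Pm v False False + Pm v True True) / 2 + (Pm (perp v) False False + Pm (perp v) True True) / 2"
    by (simp add: trace_def sum_bool2 wit_def add_divide_distrib)
  then show "trace (wit v) = 1" unfolding a b by simp
qed

lemma steered_wit: "steered M (wit v) = (\<lambda>i j. M False False * (complex_of_real (1/2) * Pm v i j)
     + M True True * (complex_of_real (1/2) * Pm (perp v) i j))"
  unfolding steered_expl by (simp add: sum_bool wit_def)

lemma ptrA_wit: "nv2 v = 1 \<Longrightarrow> ptrA (wit v) = hv (1/2) (V 0 0 0)"
proof -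
  assume n: "nv2 v = 1"
  have "ptrA (wit v) = steered idm (wit v)" by (simp add: steered_idm)
  also have "\<dots> = (\<lambda>i j. complex_of_real (1/2) * Pm v i j + complex_of_real (1/2) * Pm (perp v) i j)"
    unfolding steered_wit by (simp add: idm_def)
  also have "\<dots> = hv (1/2) (V 0 0 0)" unfolding Pm_hv hv_lin nv2_perp nv_perp n
    by (cases "nv v") simp
  finally show ?thesis .
qed

lemma steered_M0_wit: "steered M0 (wit v) = (\<lambda>i j. complex_of_real (1/2) * Pm v i j)"
  unfolding steered_wit by (simp add: M0_def)

context
  fixes \<Lambda> :: "bool cmat \<Rightarrow> bool cmat"
  assumes ch: "qubit_channel \<Lambda>"
begin

lemma witness:
  assumes nu: "\<not> unital \<Lambda>" and nsc: "\<not> semi_classical \<Lambda>"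
  shows "\<exists>\<rho>::(bool\<times>bool) cmat. density \<rho> \<and> steered_coherence (id_tensor \<Lambda> \<rho>) > steered_coherence \<rho>"
proof -
  define t where "t = tv \<Lambda>"
  have t0: "t \<noteq> V 0 0 0" using unital_iff[OF ch] nu by (simp add: t_def)
  have "\<not> (cross t (Tm \<Lambda> (V 1 0 0)) = V 0 0 0 \<and> cross t (Tm \<Lambda> (V 0 1 0)) = V 0 0 0 \<and> cross t (Tm \<Lambda> (V 0 0 1)) = V 0 0 0)"
    using sc_from_par[OF ch] t0 nsc by (auto simp: t_def)
  then obtain u where u: "nsq u = 1" "cross t (Tm \<Lambda> u) \<noteq> V 0 0 0"
    by (metis dot.simps mult_1 mult_zero_left add_0 add_0_right nsq_def)
  obtain v where v: "nv2 v = 1" "nv v = u" using axis_exists[OF u(1)] by blast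
  define \<rho> where "\<rho> = wit v"
  have d: "density \<rho>" unfolding \<rho>_def by (rule density_wit[OF v(1)])
  have Ms: "Ms \<rho> \<noteq> {}" using density_Ms[OF d] by blast
  have obE: "obas v \<in> Eb \<rho>"
    using eig_b[OF obas_on[OF v(1)], of "V 0 0 0" "1/2"] cross_zero ptrA_wit[OF v(1)]
    by (simp add: Eb_def \<rho>_def)
  have v0: "val \<rho> (obas v) M = 0" for M
  proof -
    have "sandwich v (steered M \<rho>) (perp v) = 0" "sandwich (perp v) (steered M \<rho>) v = 0"
      unfolding \<rho>_def steered_wit sandwich_lin sandwich_scale2 sandwich_Pm using inner_perp by simp_all
    then show ?thesis unfolding val_def pairs_neq by (simp add: obas_def)
  qed
  have "steered_coherence \<rho> \<le> Sv \<rho> (obas v)" using C_le[OF density_good[OF d] Ms obE] .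
  also have "Sv \<rho> (obas v) = 0"
  proof -
    have "Sv \<rho> (obas v) = (SUP M\<in>Ms \<rho>. (0::real))" unfolding Sv_def using v0 by simp
    also have "\<dots> = 0" using Ms by simp
    finally show ?thesis .
  qed
  finally have Cin: "steered_coherence \<rho> \<le> 0" .
  define K where "K = nsq (cross (Tm \<Lambda> u) t) / nsq t"
  have nt: "nsq t > 0" using t0 nsq_ge0[of t] nsq_zero_iff[of t] by simp
  have "cross (Tm \<Lambda> u) t \<noteq> V 0 0 0" using u(2) cross_anti[of "Tm \<Lambda> u" t] by (cases "cross t (Tm \<Lambda> u)") auto
  then have "nsq (cross (Tm \<Lambda> u) t) > 0" using nsq_ge0 nsq_zero_iff by (metis less_eq_real_def)
  then have K0: "K > 0" using nt by (simp add: K_def)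
  have SM0: "steered M0 \<rho> = hv (1/4) (vsc (1/4) u)"
    unfolding \<rho>_def steered_M0_wit Pm_hv hv_scale v by (cases u) simp
  have pM0: "prob_M M0 \<rho> = 1/2" unfolding prob_steered SM0 trace_hv by simp
  have M0in: "M0 \<in> Ms \<rho>" using povm_M0 pM0 by (simp add: Ms_def)
  have SM0': "steered M0 (id_tensor \<Lambda> \<rho>) = hv (1/4) (vsc (1/4) (vadd t (Tm \<Lambda> u)))"
    unfolding steered_L[OF ch] SM0 L_hv[OF ch] Tm_scale[OF ch] t_def[symmetric]
    by (cases t; cases "Tm \<Lambda> u") (simp add: add_divide_distrib)
  have pA': "ptrA (id_tensor \<Lambda> \<rho>) = hv (1/2) (vsc (1/2) t)"
    unfolding ptrA_L[OF ch] \<rho>_def ptrA_wit[OF v(1)] L_hv[OF ch] Tm_zero[OF ch] t_def[symmetric]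
    by (cases t) simp
  have good': "good (id_tensor \<Lambda> \<rho>)" using out_good[OF ch d] .
  have Ms': "Ms (id_tensor \<Lambda> \<rho>) = Ms \<rho>" using out_Ms[OF ch] .
  have lb: "sqrt K \<le> Sv (id_tensor \<Lambda> \<rho>) \<eta>" if eta: "\<eta> \<in> Eb (id_tensor \<Lambda> \<rho>)" for \<eta>
  proof -
    have on: "orthonormal_basis \<eta>" using Eb_onb[OF eta] .
    define n where "n = nv (\<eta> False)"
    have nn: "nsq n = 1" unfolding n_def using onb_char(1)[OF on] by (rule nsq_nv1)
    have "cross (vsc (1/2) t) n = V 0 0 0"
      using eig_a[of "ptrA (id_tensor \<Lambda> \<rho>)" \<eta>] eta pA' herm_hv by (simp add: Eb_def n_def)
    then have ctn: "cross t n = V 0 0 0" unfolding cross_sc1 by (cases "cross t n") simp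
    have tn: "t = vsc (dot t n) n" by (rule vec_par[OF nn ctn])
    define dd where "dd = dot t n"
    have ntd: "nsq t = dd\<^sup>2" using tn nn by (metis dd_def nsq_vsc mult_1_right)
    have "cross (Tm \<Lambda> u) t = vsc dd (cross (Tm \<Lambda> u) n)" by (subst tn) (simp add: cross_sc2 dd_def)
    then have "nsq (cross (Tm \<Lambda> u) t) = dd\<^sup>2 * nsq (cross (Tm \<Lambda> u) n)" by simp
    then have kn: "nsq (cross (Tm \<Lambda> u) n) = K" unfolding K_def ntd using nt ntd by simp
    define w where "w = vsc (1/4) (vadd t (Tm \<Lambda> u))"
    have "nsq w * nsq n = (dot w n)\<^sup>2 + nsq (cross w n)" by (rule lagrange)
    then have "nsq w - (dot w n)\<^sup>2 = nsq (cross w n)" using nn by simp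
    also have "cross w n = vsc (1/4) (cross (Tm \<Lambda> u) n)"
      unfolding w_def cross_sc1 cross_add1 ctn by (cases "cross (Tm \<Lambda> u) n") simp
    finally have "nsq w - (dot w n)\<^sup>2 = K / 16" using kn by (simp add: power2_eq_square)
    then have "val (id_tensor \<Lambda> \<rho>) \<eta> M0 = 4 * sqrt (K / 16)"
      using coh_val[OF on SM0'] prob_L[OF ch] pM0 by (simp add: w_def n_def)
    also have "\<dots> = sqrt K" by (simp add: real_sqrt_divide)
    finally have vK: "val (id_tensor \<Lambda> \<rho>) \<eta> M0 = sqrt K" .
    have b: "bdd_above (val (id_tensor \<Lambda> \<rho>) \<eta> ` Ms (id_tensor \<Lambda> \<rho>))"
      using Sv_bounds(1)[OF good' on] Ms Ms' by simp
    have "val (id_tensor \<Lambda> \<rho>) \<eta> M0 \<le> Sv (id_tensor \<Lambda> \<rho>) \<eta>"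
      unfolding Sv_def using M0in Ms' b by (simp add: cSUP_upper)
    then show ?thesis using vK by simp
  qed
  have "sqrt K \<le> steered_coherence (id_tensor \<Lambda> \<rho>)"
    unfolding sc_unfold using out_Eb[OF ch d] lb by (simp add: cINF_greatest)
  moreover have "sqrt K > 0" using K0 by simp
  ultimately have "steered_coherence \<rho> < steered_coherence (id_tensor \<Lambda> \<rho>)" using Cin by linarith
  then show ?thesis using d by blast
qed

end

theorem theorem1:
  fixes \<Lambda> :: "bool cmat \<Rightarrow> bool cmat"
  assumes "qubit_channel \<Lambda>"
  shows "(\<exists>\<rho> :: (bool \<times> bool) cmat. density \<rho> \<and>
            steered_coherence (id_tensor \<Lambda> \<rho>) > steered_coherence \<rho>)
         \<longleftrightarrow> \<not> unital \<Lambda> \<and> \<not> semi_classical \<Lambda>"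
proof
  assume "\<exists>\<rho> :: (bool \<times> bool) cmat. density \<rho> \<and> steered_coherence (id_tensor \<Lambda> \<rho>) > steered_coherence \<rho>"
  then obtain \<rho> :: "(bool \<times> bool) cmat" where d: "density \<rho>"
    and gt: "steered_coherence (id_tensor \<Lambda> \<rho>) > steered_coherence \<rho>" by blast
  show "\<not> unital \<Lambda> \<and> \<not> semi_classical \<Lambda>"
    using unital_mono[OF assms _ d] sc_mono[OF assms _ d] gt by force
next
  assume "\<not> unital \<Lambda> \<and> \<not> semi_classical \<Lambda>"
  then show "\<exists>\<rho> :: (bool \<times> bool) cmat. density \<rho> \<and> steered_coherence (id_tensor \<Lambda> \<rho>) > steered_coherence \<rho>"
    using witness[OF assms] by blast
qed



end
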